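(* In the standing setup with $A$ generic, for $i=1,2,3$ and all $x\in\mathbb R^6$: $\nabla p_0(x)=B_i\nabla q_i(x)$, where $p_0(x)=\tfrac18\operatorname{tr}(f_0'(x))^2$ and $q_i(x)=\tfrac18\operatorname{tr}(B_i^{\rm T}(f_0'(x))^2)$.
   Context: Standing setup: $J=\begin{pmatrix}0&I_3\\-I_3&0\end{pmatrix}$ ($6\times6$). $A$ is a fixed real $6\times 6$ skew-Hamiltonian matrix ($A^{\rm T}J=JA$). $H_0$ is a homogeneous cubic polynomial on $\mathbb R^6$ with $A\nabla^2H_0(x)=\nabla^2H_0(x)A^{\rm T}$ for all $x$ ($\nabla^2$ = Hesse matrix), $f_0=J\nabla H_0$, and $f_0'$ is its Jacobi matrix. Genericity: the characteristic polynomial of $A$ (a square of a cubic) has three pairwise distinct roots $\lambda_1,\lambda_2,\lambda_3$, each a double eigenvalue. $B_i=\alpha_iI+\beta_iA+\gamma_iA^2$ ($i=1,2,3$), where $\alpha_i+\beta_i\lambda+\gamma_i\lambda^2$ is the unique polynomial of degree $\le2$ equal to $-1$ at $\lambda_i$ and to $1$ at the other two eigenvalues; $B_i^2=I$. *)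

theory Defs
  imports "HOL-Analysis.Analysis"
begin

definition idx6 :: "6 \<Rightarrow> nat" where
  "idx6 i = nat (Rep_bit0 i)"

text \<open>The symplectic matrix J = [[0, I3], [-I3, 0]].\<close>
definition Jmat :: "real^6^6" where
  "Jmat = (\<chi> i j. if idx6 j = idx6 i + 3 then 1 else if idx6 i = idx6 j + 3 then -1 else 0)"

definition grad :: "(real^'n \<Rightarrow> real) \<Rightarrow> real^'n \<Rightarrow> real^'n" where
  "grad f x = (THE D. GDERIV f x :> D)"

definition jac :: "(real^'n \<Rightarrow> real^'m) \<Rightarrow> real^'n \<Rightarrow> real^'n^'m" where
  "jac f x = matrix (frechet_derivative f (at x))"

definition hess :: "(real^'n \<Rightarrow> real) \<Rightarrow> real^'n \<Rightarrow> real^'n^'n" where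
  "hess f x = jac (grad f) x"

definition hom_cubic :: "(real^'n \<Rightarrow> real) \<Rightarrow> bool" where
  "hom_cubic H \<longleftrightarrow> (\<exists>c :: 'n \<Rightarrow> 'n \<Rightarrow> 'n \<Rightarrow> real.
      \<forall>x. H x = (\<Sum>i\<in>UNIV. \<Sum>j\<in>UNIV. \<Sum>k\<in>UNIV. c i j k * x$i * x$j * x$k))"

definition charpoly :: "real^'n^'n \<Rightarrow> real \<Rightarrow> real" where
  "charpoly A t = det (mat t - A)"

end

theory Submission
  imports Defs
begin
lemma exhaust_6: fixes x :: 6 shows "x = 0 \<or> x = 1 \<or> x = 2 \<or> x = 3 \<or> x = 4 \<or> x = 5"
proof (induct x)
  case (of_int z)
  then have "z = 0 | z = 1 | z = 2 | z = 3 | z = 4 | z = 5" by fastforce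
  then show ?case by auto
qed
lemma UNIV_6: "(UNIV::6 set) = {0,1,2,3,4,5}" using exhaust_6 by auto
lemma sum6: "(\<Sum>i\<in>(UNIV::6 set). f i) = f 0 + f 1 + f 2 + f 3 + f 4 + f 5"
  unfolding UNIV_6 by (simp add: ac_simps)
lemma idx6_vals: "idx6 0 = 0" "idx6 1 = 1" "idx6 2 = 2" "idx6 3 = 3" "idx6 4 = 4" "idx6 5 = 5"
  by (simp_all add: idx6_def bit0.Rep_0 bit0.Rep_1 bit0.Rep_numeral)
lemma Jmat_entries: "Jmat $ i $ j = (if idx6 j = idx6 i + 3 then 1 else if idx6 i = idx6 j + 3 then - 1 else 0)"
  by (simp add: Jmat_def)
lemma skew_entries:
  assumes sk: "transpose A ** Jmat = Jmat ** A"
  shows "A $ 3 $ 3 = A $ 0 $ 0"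
    "A $ 3 $ 4 = A $ 1 $ 0"
    "A $ 3 $ 5 = A $ 2 $ 0"
    "A $ 4 $ 3 = A $ 0 $ 1"
    "A $ 4 $ 4 = A $ 1 $ 1"
    "A $ 4 $ 5 = A $ 2 $ 1"
    "A $ 5 $ 3 = A $ 0 $ 2"
    "A $ 5 $ 4 = A $ 1 $ 2"
    "A $ 5 $ 5 = A $ 2 $ 2"
    "A $ 0 $ 3 = 0"
    "A $ 3 $ 0 = 0"
    "A $ 1 $ 4 = 0"
    "A $ 4 $ 1 = 0"
    "A $ 2 $ 5 = 0"
    "A $ 5 $ 2 = 0"
    "A $ 1 $ 3 = - A $ 0 $ 4"
    "A $ 4 $ 0 = - A $ 3 $ 1"
    "A $ 2 $ 3 = - A $ 0 $ 5"
    "A $ 5 $ 0 = - A $ 3 $ 2"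
    "A $ 2 $ 4 = - A $ 1 $ 5"
    "A $ 5 $ 1 = - A $ 4 $ 2"
proof -
  have e: "\<And>i j. (transpose A ** Jmat) $ i $ j = (Jmat ** A) $ i $ j" using sk by simp
  have "(transpose A ** Jmat) $ 0 $ 3 = (Jmat ** A) $ 0 $ 3" by (rule e)
  then have c0: "A $ 3 $ 3 = A $ 0 $ 0" by (simp add: matrix_matrix_mult_def transpose_def sum6 Jmat_entries idx6_vals)
  have "(transpose A ** Jmat) $ 0 $ 4 = (Jmat ** A) $ 0 $ 4" by (rule e)
  then have c1: "A $ 3 $ 4 = A $ 1 $ 0" by (simp add: matrix_matrix_mult_def transpose_def sum6 Jmat_entries idx6_vals)
  have "(transpose A ** Jmat) $ 0 $ 5 = (Jmat ** A) $ 0 $ 5" by (rule e)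
  then have c2: "A $ 3 $ 5 = A $ 2 $ 0" by (simp add: matrix_matrix_mult_def transpose_def sum6 Jmat_entries idx6_vals)
  have "(transpose A ** Jmat) $ 1 $ 3 = (Jmat ** A) $ 1 $ 3" by (rule e)
  then have c3: "A $ 4 $ 3 = A $ 0 $ 1" by (simp add: matrix_matrix_mult_def transpose_def sum6 Jmat_entries idx6_vals)
  have "(transpose A ** Jmat) $ 1 $ 4 = (Jmat ** A) $ 1 $ 4" by (rule e)
  then have c4: "A $ 4 $ 4 = A $ 1 $ 1" by (simp add: matrix_matrix_mult_def transpose_def sum6 Jmat_entries idx6_vals)
  have "(transpose A ** Jmat) $ 1 $ 5 = (Jmat ** A) $ 1 $ 5" by (rule e)
  then have c5: "A $ 4 $ 5 = A $ 2 $ 1" by (simp add: matrix_matrix_mult_def transpose_def sum6 Jmat_entries idx6_vals)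
  have "(transpose A ** Jmat) $ 2 $ 3 = (Jmat ** A) $ 2 $ 3" by (rule e)
  then have c6: "A $ 5 $ 3 = A $ 0 $ 2" by (simp add: matrix_matrix_mult_def transpose_def sum6 Jmat_entries idx6_vals)
  have "(transpose A ** Jmat) $ 2 $ 4 = (Jmat ** A) $ 2 $ 4" by (rule e)
  then have c7: "A $ 5 $ 4 = A $ 1 $ 2" by (simp add: matrix_matrix_mult_def transpose_def sum6 Jmat_entries idx6_vals)
  have "(transpose A ** Jmat) $ 2 $ 5 = (Jmat ** A) $ 2 $ 5" by (rule e)
  then have c8: "A $ 5 $ 5 = A $ 2 $ 2" by (simp add: matrix_matrix_mult_def transpose_def sum6 Jmat_entries idx6_vals)
  have "(transpose A ** Jmat) $ 3 $ 3 = (Jmat ** A) $ 3 $ 3" by (rule e)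
  then have c9: "A $ 0 $ 3 = 0" by (simp add: matrix_matrix_mult_def transpose_def sum6 Jmat_entries idx6_vals)
  have "(transpose A ** Jmat) $ 0 $ 0 = (Jmat ** A) $ 0 $ 0" by (rule e)
  then have c10: "A $ 3 $ 0 = 0" by (simp add: matrix_matrix_mult_def transpose_def sum6 Jmat_entries idx6_vals)
  have "(transpose A ** Jmat) $ 4 $ 4 = (Jmat ** A) $ 4 $ 4" by (rule e)
  then have c11: "A $ 1 $ 4 = 0" by (simp add: matrix_matrix_mult_def transpose_def sum6 Jmat_entries idx6_vals)
  have "(transpose A ** Jmat) $ 1 $ 1 = (Jmat ** A) $ 1 $ 1" by (rule e)
  then have c12: "A $ 4 $ 1 = 0" by (simp add: matrix_matrix_mult_def transpose_def sum6 Jmat_entries idx6_vals)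
  have "(transpose A ** Jmat) $ 5 $ 5 = (Jmat ** A) $ 5 $ 5" by (rule e)
  then have c13: "A $ 2 $ 5 = 0" by (simp add: matrix_matrix_mult_def transpose_def sum6 Jmat_entries idx6_vals)
  have "(transpose A ** Jmat) $ 2 $ 2 = (Jmat ** A) $ 2 $ 2" by (rule e)
  then have c14: "A $ 5 $ 2 = 0" by (simp add: matrix_matrix_mult_def transpose_def sum6 Jmat_entries idx6_vals)
  have "(transpose A ** Jmat) $ 4 $ 3 = (Jmat ** A) $ 4 $ 3" by (rule e)
  then have c15: "A $ 1 $ 3 = - A $ 0 $ 4" by (simp add: matrix_matrix_mult_def transpose_def sum6 Jmat_entries idx6_vals)
  have "(transpose A ** Jmat) $ 1 $ 0 = (Jmat ** A) $ 1 $ 0" by (rule e)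
  then have c16: "A $ 4 $ 0 = - A $ 3 $ 1" by (simp add: matrix_matrix_mult_def transpose_def sum6 Jmat_entries idx6_vals)
  have "(transpose A ** Jmat) $ 5 $ 3 = (Jmat ** A) $ 5 $ 3" by (rule e)
  then have c17: "A $ 2 $ 3 = - A $ 0 $ 5" by (simp add: matrix_matrix_mult_def transpose_def sum6 Jmat_entries idx6_vals)
  have "(transpose A ** Jmat) $ 2 $ 0 = (Jmat ** A) $ 2 $ 0" by (rule e)
  then have c18: "A $ 5 $ 0 = - A $ 3 $ 2" by (simp add: matrix_matrix_mult_def transpose_def sum6 Jmat_entries idx6_vals)
  have "(transpose A ** Jmat) $ 5 $ 4 = (Jmat ** A) $ 5 $ 4" by (rule e)
  then have c19: "A $ 2 $ 4 = - A $ 1 $ 5" by (simp add: matrix_matrix_mult_def transpose_def sum6 Jmat_entries idx6_vals)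
  have "(transpose A ** Jmat) $ 2 $ 1 = (Jmat ** A) $ 2 $ 1" by (rule e)
  then have c20: "A $ 5 $ 1 = - A $ 4 $ 2" by (simp add: matrix_matrix_mult_def transpose_def sum6 Jmat_entries idx6_vals)
  show "A $ 3 $ 3 = A $ 0 $ 0" "A $ 3 $ 4 = A $ 1 $ 0" "A $ 3 $ 5 = A $ 2 $ 0" "A $ 4 $ 3 = A $ 0 $ 1" "A $ 4 $ 4 = A $ 1 $ 1" "A $ 4 $ 5 = A $ 2 $ 1" "A $ 5 $ 3 = A $ 0 $ 2" "A $ 5 $ 4 = A $ 1 $ 2" "A $ 5 $ 5 = A $ 2 $ 2" "A $ 0 $ 3 = 0" "A $ 3 $ 0 = 0" "A $ 1 $ 4 = 0" "A $ 4 $ 1 = 0" "A $ 2 $ 5 = 0" "A $ 5 $ 2 = 0" "A $ 1 $ 3 = - A $ 0 $ 4" "A $ 4 $ 0 = - A $ 3 $ 1" "A $ 2 $ 3 = - A $ 0 $ 5" "A $ 5 $ 0 = - A $ 3 $ 2" "A $ 2 $ 4 = - A $ 1 $ 5" "A $ 5 $ 1 = - A $ 4 $ 2"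
    by (rule c0 c1 c2 c3 c4 c5 c6 c7 c8 c9 c10 c11 c12 c13 c14 c15 c16 c17 c18 c19 c20)+
qed

definition "ce1 (M::real^6^6) = trace M / 2"
definition "cs2 (M::real^6^6) = trace (M ** M) / 2"
definition "cs3 (M::real^6^6) = trace (M ** M ** M) / 2"
definition "ce2 M = (ce1 M ^ 2 - cs2 M) / 2"
definition "ce3 M = (ce1 M ^ 3 - 3 * ce1 M * cs2 M + 2 * cs3 M) / 6"

lemma cayley_skew:
  assumes sk: "transpose A ** Jmat = Jmat ** A"
  shows "A ** A ** A = ce1 A *\<^sub>R (A ** A) - ce2 A *\<^sub>R A + ce3 A *\<^sub>R mat 1"
proof -
  note S = skew_entries[OF sk]
  have a2_00: "(A ** A) $ 0 $ 0 = (A $ 0 $ 0 * A $ 0 $ 0 + A $ 0 $ 1 * A $ 1 $ 0 + A $ 0 $ 2 * A $ 2 $ 0 - A $ 0 $ 4 * A $ 3 $ 1 - A $ 0 $ 5 * A $ 3 $ 2)"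
    by (simp add: matrix_matrix_mult_def sum6 S; algebra)
  have a2_01: "(A ** A) $ 0 $ 1 = (A $ 0 $ 0 * A $ 0 $ 1 + A $ 0 $ 1 * A $ 1 $ 1 + A $ 0 $ 2 * A $ 2 $ 1 - A $ 0 $ 5 * A $ 4 $ 2)"
    by (simp add: matrix_matrix_mult_def sum6 S; algebra)
  have a2_02: "(A ** A) $ 0 $ 2 = (A $ 0 $ 0 * A $ 0 $ 2 + A $ 0 $ 1 * A $ 1 $ 2 + A $ 0 $ 2 * A $ 2 $ 2 + A $ 0 $ 4 * A $ 4 $ 2)"
    by (simp add: matrix_matrix_mult_def sum6 S; algebra)
  have a2_03: "(A ** A) $ 0 $ 3 = 0"
    by (simp add: matrix_matrix_mult_def sum6 S; algebra)
  have a2_04: "(A ** A) $ 0 $ 4 = (A $ 0 $ 0 * A $ 0 $ 4 - A $ 0 $ 2 * A $ 1 $ 5 + A $ 0 $ 4 * A $ 1 $ 1 + A $ 0 $ 5 * A $ 1 $ 2)"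
    by (simp add: matrix_matrix_mult_def sum6 S; algebra)
  have a2_05: "(A ** A) $ 0 $ 5 = (A $ 0 $ 0 * A $ 0 $ 5 + A $ 0 $ 1 * A $ 1 $ 5 + A $ 0 $ 4 * A $ 2 $ 1 + A $ 0 $ 5 * A $ 2 $ 2)"
    by (simp add: matrix_matrix_mult_def sum6 S; algebra)
  have a2_10: "(A ** A) $ 1 $ 0 = (A $ 0 $ 0 * A $ 1 $ 0 + A $ 1 $ 0 * A $ 1 $ 1 + A $ 1 $ 2 * A $ 2 $ 0 - A $ 1 $ 5 * A $ 3 $ 2)"
    by (simp add: matrix_matrix_mult_def sum6 S; algebra)
  have a2_11: "(A ** A) $ 1 $ 1 = (A $ 0 $ 1 * A $ 1 $ 0 - A $ 0 $ 4 * A $ 3 $ 1 + A $ 1 $ 1 * A $ 1 $ 1 + A $ 1 $ 2 * A $ 2 $ 1 - A $ 1 $ 5 * A $ 4 $ 2)"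
    by (simp add: matrix_matrix_mult_def sum6 S; algebra)
  have a2_12: "(A ** A) $ 1 $ 2 = (A $ 0 $ 2 * A $ 1 $ 0 - A $ 0 $ 4 * A $ 3 $ 2 + A $ 1 $ 1 * A $ 1 $ 2 + A $ 1 $ 2 * A $ 2 $ 2)"
    by (simp add: matrix_matrix_mult_def sum6 S; algebra)
  have a2_13: "(A ** A) $ 1 $ 3 = (- A $ 0 $ 0 * A $ 0 $ 4 + A $ 0 $ 2 * A $ 1 $ 5 - A $ 0 $ 4 * A $ 1 $ 1 - A $ 0 $ 5 * A $ 1 $ 2)"
    by (simp add: matrix_matrix_mult_def sum6 S; algebra)
  have a2_14: "(A ** A) $ 1 $ 4 = 0"
    by (simp add: matrix_matrix_mult_def sum6 S; algebra)
  have a2_15: "(A ** A) $ 1 $ 5 = (- A $ 0 $ 4 * A $ 2 $ 0 + A $ 0 $ 5 * A $ 1 $ 0 + A $ 1 $ 1 * A $ 1 $ 5 + A $ 1 $ 5 * A $ 2 $ 2)"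
    by (simp add: matrix_matrix_mult_def sum6 S; algebra)
  have a2_20: "(A ** A) $ 2 $ 0 = (A $ 0 $ 0 * A $ 2 $ 0 + A $ 1 $ 0 * A $ 2 $ 1 + A $ 1 $ 5 * A $ 3 $ 1 + A $ 2 $ 0 * A $ 2 $ 2)"
    by (simp add: matrix_matrix_mult_def sum6 S; algebra)
  have a2_21: "(A ** A) $ 2 $ 1 = (A $ 0 $ 1 * A $ 2 $ 0 - A $ 0 $ 5 * A $ 3 $ 1 + A $ 1 $ 1 * A $ 2 $ 1 + A $ 2 $ 1 * A $ 2 $ 2)"
    by (simp add: matrix_matrix_mult_def sum6 S; algebra)
  have a2_22: "(A ** A) $ 2 $ 2 = (A $ 0 $ 2 * A $ 2 $ 0 - A $ 0 $ 5 * A $ 3 $ 2 + A $ 1 $ 2 * A $ 2 $ 1 - A $ 1 $ 5 * A $ 4 $ 2 + A $ 2 $ 2 * A $ 2 $ 2)"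
    by (simp add: matrix_matrix_mult_def sum6 S; algebra)
  have a2_23: "(A ** A) $ 2 $ 3 = (- A $ 0 $ 0 * A $ 0 $ 5 - A $ 0 $ 1 * A $ 1 $ 5 - A $ 0 $ 4 * A $ 2 $ 1 - A $ 0 $ 5 * A $ 2 $ 2)"
    by (simp add: matrix_matrix_mult_def sum6 S; algebra)
  have a2_24: "(A ** A) $ 2 $ 4 = (A $ 0 $ 4 * A $ 2 $ 0 - A $ 0 $ 5 * A $ 1 $ 0 - A $ 1 $ 1 * A $ 1 $ 5 - A $ 1 $ 5 * A $ 2 $ 2)"
    by (simp add: matrix_matrix_mult_def sum6 S; algebra)
  have a2_25: "(A ** A) $ 2 $ 5 = 0"
    by (simp add: matrix_matrix_mult_def sum6 S; algebra)
  have a2_30: "(A ** A) $ 3 $ 0 = 0"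
    by (simp add: matrix_matrix_mult_def sum6 S; algebra)
  have a2_31: "(A ** A) $ 3 $ 1 = (A $ 0 $ 0 * A $ 3 $ 1 + A $ 1 $ 1 * A $ 3 $ 1 - A $ 2 $ 0 * A $ 4 $ 2 + A $ 2 $ 1 * A $ 3 $ 2)"
    by (simp add: matrix_matrix_mult_def sum6 S; algebra)
  have a2_32: "(A ** A) $ 3 $ 2 = (A $ 0 $ 0 * A $ 3 $ 2 + A $ 1 $ 0 * A $ 4 $ 2 + A $ 1 $ 2 * A $ 3 $ 1 + A $ 2 $ 2 * A $ 3 $ 2)"
    by (simp add: matrix_matrix_mult_def sum6 S; algebra)
  have a2_33: "(A ** A) $ 3 $ 3 = (A $ 0 $ 0 * A $ 0 $ 0 + A $ 0 $ 1 * A $ 1 $ 0 + A $ 0 $ 2 * A $ 2 $ 0 - A $ 0 $ 4 * A $ 3 $ 1 - A $ 0 $ 5 * A $ 3 $ 2)"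
    by (simp add: matrix_matrix_mult_def sum6 S; algebra)
  have a2_34: "(A ** A) $ 3 $ 4 = (A $ 0 $ 0 * A $ 1 $ 0 + A $ 1 $ 0 * A $ 1 $ 1 + A $ 1 $ 2 * A $ 2 $ 0 - A $ 1 $ 5 * A $ 3 $ 2)"
    by (simp add: matrix_matrix_mult_def sum6 S; algebra)
  have a2_35: "(A ** A) $ 3 $ 5 = (A $ 0 $ 0 * A $ 2 $ 0 + A $ 1 $ 0 * A $ 2 $ 1 + A $ 1 $ 5 * A $ 3 $ 1 + A $ 2 $ 0 * A $ 2 $ 2)"
    by (simp add: matrix_matrix_mult_def sum6 S; algebra)
  have a2_40: "(A ** A) $ 4 $ 0 = (- A $ 0 $ 0 * A $ 3 $ 1 - A $ 1 $ 1 * A $ 3 $ 1 + A $ 2 $ 0 * A $ 4 $ 2 - A $ 2 $ 1 * A $ 3 $ 2)"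
    by (simp add: matrix_matrix_mult_def sum6 S; algebra)
  have a2_41: "(A ** A) $ 4 $ 1 = 0"
    by (simp add: matrix_matrix_mult_def sum6 S; algebra)
  have a2_42: "(A ** A) $ 4 $ 2 = (A $ 0 $ 1 * A $ 3 $ 2 - A $ 0 $ 2 * A $ 3 $ 1 + A $ 1 $ 1 * A $ 4 $ 2 + A $ 2 $ 2 * A $ 4 $ 2)"
    by (simp add: matrix_matrix_mult_def sum6 S; algebra)
  have a2_43: "(A ** A) $ 4 $ 3 = (A $ 0 $ 0 * A $ 0 $ 1 + A $ 0 $ 1 * A $ 1 $ 1 + A $ 0 $ 2 * A $ 2 $ 1 - A $ 0 $ 5 * A $ 4 $ 2)"
    by (simp add: matrix_matrix_mult_def sum6 S; algebra)
  have a2_44: "(A ** A) $ 4 $ 4 = (A $ 0 $ 1 * A $ 1 $ 0 - A $ 0 $ 4 * A $ 3 $ 1 + A $ 1 $ 1 * A $ 1 $ 1 + A $ 1 $ 2 * A $ 2 $ 1 - A $ 1 $ 5 * A $ 4 $ 2)"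
    by (simp add: matrix_matrix_mult_def sum6 S; algebra)
  have a2_45: "(A ** A) $ 4 $ 5 = (A $ 0 $ 1 * A $ 2 $ 0 - A $ 0 $ 5 * A $ 3 $ 1 + A $ 1 $ 1 * A $ 2 $ 1 + A $ 2 $ 1 * A $ 2 $ 2)"
    by (simp add: matrix_matrix_mult_def sum6 S; algebra)
  have a2_50: "(A ** A) $ 5 $ 0 = (- A $ 0 $ 0 * A $ 3 $ 2 - A $ 1 $ 0 * A $ 4 $ 2 - A $ 1 $ 2 * A $ 3 $ 1 - A $ 2 $ 2 * A $ 3 $ 2)"
    by (simp add: matrix_matrix_mult_def sum6 S; algebra)
  have a2_51: "(A ** A) $ 5 $ 1 = (- A $ 0 $ 1 * A $ 3 $ 2 + A $ 0 $ 2 * A $ 3 $ 1 - A $ 1 $ 1 * A $ 4 $ 2 - A $ 2 $ 2 * A $ 4 $ 2)"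
    by (simp add: matrix_matrix_mult_def sum6 S; algebra)
  have a2_52: "(A ** A) $ 5 $ 2 = 0"
    by (simp add: matrix_matrix_mult_def sum6 S; algebra)
  have a2_53: "(A ** A) $ 5 $ 3 = (A $ 0 $ 0 * A $ 0 $ 2 + A $ 0 $ 1 * A $ 1 $ 2 + A $ 0 $ 2 * A $ 2 $ 2 + A $ 0 $ 4 * A $ 4 $ 2)"
    by (simp add: matrix_matrix_mult_def sum6 S; algebra)
  have a2_54: "(A ** A) $ 5 $ 4 = (A $ 0 $ 2 * A $ 1 $ 0 - A $ 0 $ 4 * A $ 3 $ 2 + A $ 1 $ 1 * A $ 1 $ 2 + A $ 1 $ 2 * A $ 2 $ 2)"
    by (simp add: matrix_matrix_mult_def sum6 S; algebra)
  have a2_55: "(A ** A) $ 5 $ 5 = (A $ 0 $ 2 * A $ 2 $ 0 - A $ 0 $ 5 * A $ 3 $ 2 + A $ 1 $ 2 * A $ 2 $ 1 - A $ 1 $ 5 * A $ 4 $ 2 + A $ 2 $ 2 * A $ 2 $ 2)"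
    by (simp add: matrix_matrix_mult_def sum6 S; algebra)
  have a3_00: "(A ** A ** A) $ 0 $ 0 = (A $ 0 $ 0 * A $ 0 $ 0 * A $ 0 $ 0 + 2 * A $ 0 $ 0 * A $ 0 $ 1 * A $ 1 $ 0 + 2 * A $ 0 $ 0 * A $ 0 $ 2 * A $ 2 $ 0 - 2 * A $ 0 $ 0 * A $ 0 $ 4 * A $ 3 $ 1 - 2 * A $ 0 $ 0 * A $ 0 $ 5 * A $ 3 $ 2 + A $ 0 $ 1 * A $ 1 $ 0 * A $ 1 $ 1 + A $ 0 $ 1 * A $ 1 $ 2 * A $ 2 $ 0 - A $ 0 $ 1 * A $ 1 $ 5 * A $ 3 $ 2 + A $ 0 $ 2 * A $ 1 $ 0 * A $ 2 $ 1 + A $ 0 $ 2 * A $ 1 $ 5 * A $ 3 $ 1 + A $ 0 $ 2 * A $ 2 $ 0 * A $ 2 $ 2 - A $ 0 $ 4 * A $ 1 $ 1 * A $ 3 $ 1 + A $ 0 $ 4 * A $ 2 $ 0 * A $ 4 $ 2 - A $ 0 $ 4 * A $ 2 $ 1 * A $ 3 $ 2 - A $ 0 $ 5 * A $ 1 $ 0 * A $ 4 $ 2 - A $ 0 $ 5 * A $ 1 $ 2 * A $ 3 $ 1 - A $ 0 $ 5 * A $ 2 $ 2 * A $ 3 $ 2)"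
    by (simp add: matrix_matrix_mult_def sum6 S a2_00 a2_01 a2_02 a2_03 a2_04 a2_05; algebra)
  have a3_01: "(A ** A ** A) $ 0 $ 1 = (A $ 0 $ 0 * A $ 0 $ 0 * A $ 0 $ 1 + A $ 0 $ 0 * A $ 0 $ 1 * A $ 1 $ 1 + A $ 0 $ 0 * A $ 0 $ 2 * A $ 2 $ 1 - A $ 0 $ 0 * A $ 0 $ 5 * A $ 4 $ 2 + A $ 0 $ 1 * A $ 0 $ 1 * A $ 1 $ 0 + A $ 0 $ 1 * A $ 0 $ 2 * A $ 2 $ 0 - A $ 0 $ 1 * A $ 0 $ 4 * A $ 3 $ 1 - A $ 0 $ 1 * A $ 0 $ 5 * A $ 3 $ 2 + A $ 0 $ 1 * A $ 1 $ 1 * A $ 1 $ 1 + A $ 0 $ 1 * A $ 1 $ 2 * A $ 2 $ 1 - A $ 0 $ 1 * A $ 1 $ 5 * A $ 4 $ 2 + A $ 0 $ 2 * A $ 1 $ 1 * A $ 2 $ 1 + A $ 0 $ 2 * A $ 2 $ 1 * A $ 2 $ 2 - A $ 0 $ 5 * A $ 1 $ 1 * A $ 4 $ 2 - A $ 0 $ 5 * A $ 2 $ 2 * A $ 4 $ 2)"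
    by (simp add: matrix_matrix_mult_def sum6 S a2_00 a2_01 a2_02 a2_03 a2_04 a2_05; algebra)
  have a3_02: "(A ** A ** A) $ 0 $ 2 = (A $ 0 $ 0 * A $ 0 $ 0 * A $ 0 $ 2 + A $ 0 $ 0 * A $ 0 $ 1 * A $ 1 $ 2 + A $ 0 $ 0 * A $ 0 $ 2 * A $ 2 $ 2 + A $ 0 $ 0 * A $ 0 $ 4 * A $ 4 $ 2 + A $ 0 $ 1 * A $ 0 $ 2 * A $ 1 $ 0 + A $ 0 $ 1 * A $ 1 $ 1 * A $ 1 $ 2 + A $ 0 $ 1 * A $ 1 $ 2 * A $ 2 $ 2 + A $ 0 $ 2 * A $ 0 $ 2 * A $ 2 $ 0 - A $ 0 $ 2 * A $ 0 $ 4 * A $ 3 $ 1 - A $ 0 $ 2 * A $ 0 $ 5 * A $ 3 $ 2 + A $ 0 $ 2 * A $ 1 $ 2 * A $ 2 $ 1 - A $ 0 $ 2 * A $ 1 $ 5 * A $ 4 $ 2 + A $ 0 $ 2 * A $ 2 $ 2 * A $ 2 $ 2 + A $ 0 $ 4 * A $ 1 $ 1 * A $ 4 $ 2 + A $ 0 $ 4 * A $ 2 $ 2 * A $ 4 $ 2)"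
    by (simp add: matrix_matrix_mult_def sum6 S a2_00 a2_01 a2_02 a2_03 a2_04 a2_05; algebra)
  have a3_03: "(A ** A ** A) $ 0 $ 3 = 0"
    by (simp add: matrix_matrix_mult_def sum6 S a2_00 a2_01 a2_02 a2_03 a2_04 a2_05; algebra)
  have a3_04: "(A ** A ** A) $ 0 $ 4 = (A $ 0 $ 0 * A $ 0 $ 0 * A $ 0 $ 4 - A $ 0 $ 0 * A $ 0 $ 2 * A $ 1 $ 5 + A $ 0 $ 0 * A $ 0 $ 4 * A $ 1 $ 1 + A $ 0 $ 0 * A $ 0 $ 5 * A $ 1 $ 2 + A $ 0 $ 1 * A $ 0 $ 4 * A $ 1 $ 0 + A $ 0 $ 2 * A $ 0 $ 4 * A $ 2 $ 0 - A $ 0 $ 2 * A $ 1 $ 1 * A $ 1 $ 5 - A $ 0 $ 2 * A $ 1 $ 5 * A $ 2 $ 2 - A $ 0 $ 4 * A $ 0 $ 4 * A $ 3 $ 1 - A $ 0 $ 4 * A $ 0 $ 5 * A $ 3 $ 2 + A $ 0 $ 4 * A $ 1 $ 1 * A $ 1 $ 1 + A $ 0 $ 4 * A $ 1 $ 2 * A $ 2 $ 1 - A $ 0 $ 4 * A $ 1 $ 5 * A $ 4 $ 2 + A $ 0 $ 5 * A $ 1 $ 1 * A $ 1 $ 2 + A $ 0 $ 5 * A $ 1 $ 2 * A $ 2 $ 2)"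
    by (simp add: matrix_matrix_mult_def sum6 S a2_00 a2_01 a2_02 a2_03 a2_04 a2_05; algebra)
  have a3_05: "(A ** A ** A) $ 0 $ 5 = (A $ 0 $ 0 * A $ 0 $ 0 * A $ 0 $ 5 + A $ 0 $ 0 * A $ 0 $ 1 * A $ 1 $ 5 + A $ 0 $ 0 * A $ 0 $ 4 * A $ 2 $ 1 + A $ 0 $ 0 * A $ 0 $ 5 * A $ 2 $ 2 + A $ 0 $ 1 * A $ 0 $ 5 * A $ 1 $ 0 + A $ 0 $ 1 * A $ 1 $ 1 * A $ 1 $ 5 + A $ 0 $ 1 * A $ 1 $ 5 * A $ 2 $ 2 + A $ 0 $ 2 * A $ 0 $ 5 * A $ 2 $ 0 - A $ 0 $ 4 * A $ 0 $ 5 * A $ 3 $ 1 + A $ 0 $ 4 * A $ 1 $ 1 * A $ 2 $ 1 + A $ 0 $ 4 * A $ 2 $ 1 * A $ 2 $ 2 - A $ 0 $ 5 * A $ 0 $ 5 * A $ 3 $ 2 + A $ 0 $ 5 * A $ 1 $ 2 * A $ 2 $ 1 - A $ 0 $ 5 * A $ 1 $ 5 * A $ 4 $ 2 + A $ 0 $ 5 * A $ 2 $ 2 * A $ 2 $ 2)"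
    by (simp add: matrix_matrix_mult_def sum6 S a2_00 a2_01 a2_02 a2_03 a2_04 a2_05; algebra)
  have a3_10: "(A ** A ** A) $ 1 $ 0 = (A $ 0 $ 0 * A $ 0 $ 0 * A $ 1 $ 0 + A $ 0 $ 0 * A $ 1 $ 0 * A $ 1 $ 1 + A $ 0 $ 0 * A $ 1 $ 2 * A $ 2 $ 0 - A $ 0 $ 0 * A $ 1 $ 5 * A $ 3 $ 2 + A $ 0 $ 1 * A $ 1 $ 0 * A $ 1 $ 0 + A $ 0 $ 2 * A $ 1 $ 0 * A $ 2 $ 0 - A $ 0 $ 4 * A $ 1 $ 0 * A $ 3 $ 1 - A $ 0 $ 5 * A $ 1 $ 0 * A $ 3 $ 2 + A $ 1 $ 0 * A $ 1 $ 1 * A $ 1 $ 1 + A $ 1 $ 0 * A $ 1 $ 2 * A $ 2 $ 1 - A $ 1 $ 0 * A $ 1 $ 5 * A $ 4 $ 2 + A $ 1 $ 1 * A $ 1 $ 2 * A $ 2 $ 0 - A $ 1 $ 1 * A $ 1 $ 5 * A $ 3 $ 2 + A $ 1 $ 2 * A $ 2 $ 0 * A $ 2 $ 2 - A $ 1 $ 5 * A $ 2 $ 2 * A $ 3 $ 2)"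
    by (simp add: matrix_matrix_mult_def sum6 S a2_10 a2_11 a2_12 a2_13 a2_14 a2_15; algebra)
  have a3_11: "(A ** A ** A) $ 1 $ 1 = (A $ 0 $ 0 * A $ 0 $ 1 * A $ 1 $ 0 - A $ 0 $ 0 * A $ 0 $ 4 * A $ 3 $ 1 + 2 * A $ 0 $ 1 * A $ 1 $ 0 * A $ 1 $ 1 + A $ 0 $ 1 * A $ 1 $ 2 * A $ 2 $ 0 - A $ 0 $ 1 * A $ 1 $ 5 * A $ 3 $ 2 + A $ 0 $ 2 * A $ 1 $ 0 * A $ 2 $ 1 + A $ 0 $ 2 * A $ 1 $ 5 * A $ 3 $ 1 - 2 * A $ 0 $ 4 * A $ 1 $ 1 * A $ 3 $ 1 + A $ 0 $ 4 * A $ 2 $ 0 * A $ 4 $ 2 - A $ 0 $ 4 * A $ 2 $ 1 * A $ 3 $ 2 - A $ 0 $ 5 * A $ 1 $ 0 * A $ 4 $ 2 - A $ 0 $ 5 * A $ 1 $ 2 * A $ 3 $ 1 + A $ 1 $ 1 * A $ 1 $ 1 * A $ 1 $ 1 + 2 * A $ 1 $ 1 * A $ 1 $ 2 * A $ 2 $ 1 - 2 * A $ 1 $ 1 * A $ 1 $ 5 * A $ 4 $ 2 + A $ 1 $ 2 * A $ 2 $ 1 * A $ 2 $ 2 - A $ 1 $ 5 * A $ 2 $ 2 * A $ 4 $ 2)"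
    by (simp add: matrix_matrix_mult_def sum6 S a2_10 a2_11 a2_12 a2_13 a2_14 a2_15; algebra)
  have a3_12: "(A ** A ** A) $ 1 $ 2 = (A $ 0 $ 0 * A $ 0 $ 2 * A $ 1 $ 0 - A $ 0 $ 0 * A $ 0 $ 4 * A $ 3 $ 2 + A $ 0 $ 1 * A $ 1 $ 0 * A $ 1 $ 2 + A $ 0 $ 2 * A $ 1 $ 0 * A $ 1 $ 1 + A $ 0 $ 2 * A $ 1 $ 0 * A $ 2 $ 2 + A $ 0 $ 2 * A $ 1 $ 2 * A $ 2 $ 0 - A $ 0 $ 4 * A $ 1 $ 1 * A $ 3 $ 2 - A $ 0 $ 4 * A $ 1 $ 2 * A $ 3 $ 1 - A $ 0 $ 4 * A $ 2 $ 2 * A $ 3 $ 2 - A $ 0 $ 5 * A $ 1 $ 2 * A $ 3 $ 2 + A $ 1 $ 1 * A $ 1 $ 1 * A $ 1 $ 2 + A $ 1 $ 1 * A $ 1 $ 2 * A $ 2 $ 2 + A $ 1 $ 2 * A $ 1 $ 2 * A $ 2 $ 1 - A $ 1 $ 2 * A $ 1 $ 5 * A $ 4 $ 2 + A $ 1 $ 2 * A $ 2 $ 2 * A $ 2 $ 2)"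
    by (simp add: matrix_matrix_mult_def sum6 S a2_10 a2_11 a2_12 a2_13 a2_14 a2_15; algebra)
  have a3_13: "(A ** A ** A) $ 1 $ 3 = (- A $ 0 $ 0 * A $ 0 $ 0 * A $ 0 $ 4 + A $ 0 $ 0 * A $ 0 $ 2 * A $ 1 $ 5 - A $ 0 $ 0 * A $ 0 $ 4 * A $ 1 $ 1 - A $ 0 $ 0 * A $ 0 $ 5 * A $ 1 $ 2 - A $ 0 $ 1 * A $ 0 $ 4 * A $ 1 $ 0 - A $ 0 $ 2 * A $ 0 $ 4 * A $ 2 $ 0 + A $ 0 $ 2 * A $ 1 $ 1 * A $ 1 $ 5 + A $ 0 $ 2 * A $ 1 $ 5 * A $ 2 $ 2 + A $ 0 $ 4 * A $ 0 $ 4 * A $ 3 $ 1 + A $ 0 $ 4 * A $ 0 $ 5 * A $ 3 $ 2 - A $ 0 $ 4 * A $ 1 $ 1 * A $ 1 $ 1 - A $ 0 $ 4 * A $ 1 $ 2 * A $ 2 $ 1 + A $ 0 $ 4 * A $ 1 $ 5 * A $ 4 $ 2 - A $ 0 $ 5 * A $ 1 $ 1 * A $ 1 $ 2 - A $ 0 $ 5 * A $ 1 $ 2 * A $ 2 $ 2)"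
    by (simp add: matrix_matrix_mult_def sum6 S a2_10 a2_11 a2_12 a2_13 a2_14 a2_15; algebra)
  have a3_14: "(A ** A ** A) $ 1 $ 4 = 0"
    by (simp add: matrix_matrix_mult_def sum6 S a2_10 a2_11 a2_12 a2_13 a2_14 a2_15; algebra)
  have a3_15: "(A ** A ** A) $ 1 $ 5 = (- A $ 0 $ 0 * A $ 0 $ 4 * A $ 2 $ 0 + A $ 0 $ 0 * A $ 0 $ 5 * A $ 1 $ 0 + A $ 0 $ 1 * A $ 1 $ 0 * A $ 1 $ 5 + A $ 0 $ 2 * A $ 1 $ 5 * A $ 2 $ 0 - A $ 0 $ 4 * A $ 1 $ 1 * A $ 2 $ 0 - A $ 0 $ 4 * A $ 1 $ 5 * A $ 3 $ 1 - A $ 0 $ 4 * A $ 2 $ 0 * A $ 2 $ 2 + A $ 0 $ 5 * A $ 1 $ 0 * A $ 1 $ 1 + A $ 0 $ 5 * A $ 1 $ 0 * A $ 2 $ 2 - A $ 0 $ 5 * A $ 1 $ 5 * A $ 3 $ 2 + A $ 1 $ 1 * A $ 1 $ 1 * A $ 1 $ 5 + A $ 1 $ 1 * A $ 1 $ 5 * A $ 2 $ 2 + A $ 1 $ 2 * A $ 1 $ 5 * A $ 2 $ 1 - A $ 1 $ 5 * A $ 1 $ 5 * A $ 4 $ 2 + A $ 1 $ 5 * A $ 2 $ 2 * A $ 2 $ 2)"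
    by (simp add: matrix_matrix_mult_def sum6 S a2_10 a2_11 a2_12 a2_13 a2_14 a2_15; algebra)
  have a3_20: "(A ** A ** A) $ 2 $ 0 = (A $ 0 $ 0 * A $ 0 $ 0 * A $ 2 $ 0 + A $ 0 $ 0 * A $ 1 $ 0 * A $ 2 $ 1 + A $ 0 $ 0 * A $ 1 $ 5 * A $ 3 $ 1 + A $ 0 $ 0 * A $ 2 $ 0 * A $ 2 $ 2 + A $ 0 $ 1 * A $ 1 $ 0 * A $ 2 $ 0 + A $ 0 $ 2 * A $ 2 $ 0 * A $ 2 $ 0 - A $ 0 $ 4 * A $ 2 $ 0 * A $ 3 $ 1 - A $ 0 $ 5 * A $ 2 $ 0 * A $ 3 $ 2 + A $ 1 $ 0 * A $ 1 $ 1 * A $ 2 $ 1 + A $ 1 $ 0 * A $ 2 $ 1 * A $ 2 $ 2 + A $ 1 $ 1 * A $ 1 $ 5 * A $ 3 $ 1 + A $ 1 $ 2 * A $ 2 $ 0 * A $ 2 $ 1 - A $ 1 $ 5 * A $ 2 $ 0 * A $ 4 $ 2 + A $ 1 $ 5 * A $ 2 $ 2 * A $ 3 $ 1 + A $ 2 $ 0 * A $ 2 $ 2 * A $ 2 $ 2)"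
    by (simp add: matrix_matrix_mult_def sum6 S a2_20 a2_21 a2_22 a2_23 a2_24 a2_25; algebra)
  have a3_21: "(A ** A ** A) $ 2 $ 1 = (A $ 0 $ 0 * A $ 0 $ 1 * A $ 2 $ 0 - A $ 0 $ 0 * A $ 0 $ 5 * A $ 3 $ 1 + A $ 0 $ 1 * A $ 1 $ 0 * A $ 2 $ 1 + A $ 0 $ 1 * A $ 1 $ 1 * A $ 2 $ 0 + A $ 0 $ 1 * A $ 2 $ 0 * A $ 2 $ 2 + A $ 0 $ 2 * A $ 2 $ 0 * A $ 2 $ 1 - A $ 0 $ 4 * A $ 2 $ 1 * A $ 3 $ 1 - A $ 0 $ 5 * A $ 1 $ 1 * A $ 3 $ 1 - A $ 0 $ 5 * A $ 2 $ 1 * A $ 3 $ 2 - A $ 0 $ 5 * A $ 2 $ 2 * A $ 3 $ 1 + A $ 1 $ 1 * A $ 1 $ 1 * A $ 2 $ 1 + A $ 1 $ 1 * A $ 2 $ 1 * A $ 2 $ 2 + A $ 1 $ 2 * A $ 2 $ 1 * A $ 2 $ 1 - A $ 1 $ 5 * A $ 2 $ 1 * A $ 4 $ 2 + A $ 2 $ 1 * A $ 2 $ 2 * A $ 2 $ 2)"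
    by (simp add: matrix_matrix_mult_def sum6 S a2_20 a2_21 a2_22 a2_23 a2_24 a2_25; algebra)
  have a3_22: "(A ** A ** A) $ 2 $ 2 = (A $ 0 $ 0 * A $ 0 $ 2 * A $ 2 $ 0 - A $ 0 $ 0 * A $ 0 $ 5 * A $ 3 $ 2 + A $ 0 $ 1 * A $ 1 $ 2 * A $ 2 $ 0 - A $ 0 $ 1 * A $ 1 $ 5 * A $ 3 $ 2 + A $ 0 $ 2 * A $ 1 $ 0 * A $ 2 $ 1 + A $ 0 $ 2 * A $ 1 $ 5 * A $ 3 $ 1 + 2 * A $ 0 $ 2 * A $ 2 $ 0 * A $ 2 $ 2 + A $ 0 $ 4 * A $ 2 $ 0 * A $ 4 $ 2 - A $ 0 $ 4 * A $ 2 $ 1 * A $ 3 $ 2 - A $ 0 $ 5 * A $ 1 $ 0 * A $ 4 $ 2 - A $ 0 $ 5 * A $ 1 $ 2 * A $ 3 $ 1 - 2 * A $ 0 $ 5 * A $ 2 $ 2 * A $ 3 $ 2 + A $ 1 $ 1 * A $ 1 $ 2 * A $ 2 $ 1 - A $ 1 $ 1 * A $ 1 $ 5 * A $ 4 $ 2 + 2 * A $ 1 $ 2 * A $ 2 $ 1 * A $ 2 $ 2 - 2 * A $ 1 $ 5 * A $ 2 $ 2 * A $ 4 $ 2 + A $ 2 $ 2 * A $ 2 $ 2 * A $ 2 $ 2)"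
    by (simp add: matrix_matrix_mult_def sum6 S a2_20 a2_21 a2_22 a2_23 a2_24 a2_25; algebra)
  have a3_23: "(A ** A ** A) $ 2 $ 3 = (- A $ 0 $ 0 * A $ 0 $ 0 * A $ 0 $ 5 - A $ 0 $ 0 * A $ 0 $ 1 * A $ 1 $ 5 - A $ 0 $ 0 * A $ 0 $ 4 * A $ 2 $ 1 - A $ 0 $ 0 * A $ 0 $ 5 * A $ 2 $ 2 - A $ 0 $ 1 * A $ 0 $ 5 * A $ 1 $ 0 - A $ 0 $ 1 * A $ 1 $ 1 * A $ 1 $ 5 - A $ 0 $ 1 * A $ 1 $ 5 * A $ 2 $ 2 - A $ 0 $ 2 * A $ 0 $ 5 * A $ 2 $ 0 + A $ 0 $ 4 * A $ 0 $ 5 * A $ 3 $ 1 - A $ 0 $ 4 * A $ 1 $ 1 * A $ 2 $ 1 - A $ 0 $ 4 * A $ 2 $ 1 * A $ 2 $ 2 + A $ 0 $ 5 * A $ 0 $ 5 * A $ 3 $ 2 - A $ 0 $ 5 * A $ 1 $ 2 * A $ 2 $ 1 + A $ 0 $ 5 * A $ 1 $ 5 * A $ 4 $ 2 - A $ 0 $ 5 * A $ 2 $ 2 * A $ 2 $ 2)"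
    by (simp add: matrix_matrix_mult_def sum6 S a2_20 a2_21 a2_22 a2_23 a2_24 a2_25; algebra)
  have a3_24: "(A ** A ** A) $ 2 $ 4 = (A $ 0 $ 0 * A $ 0 $ 4 * A $ 2 $ 0 - A $ 0 $ 0 * A $ 0 $ 5 * A $ 1 $ 0 - A $ 0 $ 1 * A $ 1 $ 0 * A $ 1 $ 5 - A $ 0 $ 2 * A $ 1 $ 5 * A $ 2 $ 0 + A $ 0 $ 4 * A $ 1 $ 1 * A $ 2 $ 0 + A $ 0 $ 4 * A $ 1 $ 5 * A $ 3 $ 1 + A $ 0 $ 4 * A $ 2 $ 0 * A $ 2 $ 2 - A $ 0 $ 5 * A $ 1 $ 0 * A $ 1 $ 1 - A $ 0 $ 5 * A $ 1 $ 0 * A $ 2 $ 2 + A $ 0 $ 5 * A $ 1 $ 5 * A $ 3 $ 2 - A $ 1 $ 1 * A $ 1 $ 1 * A $ 1 $ 5 - A $ 1 $ 1 * A $ 1 $ 5 * A $ 2 $ 2 - A $ 1 $ 2 * A $ 1 $ 5 * A $ 2 $ 1 + A $ 1 $ 5 * A $ 1 $ 5 * A $ 4 $ 2 - A $ 1 $ 5 * A $ 2 $ 2 * A $ 2 $ 2)"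
    by (simp add: matrix_matrix_mult_def sum6 S a2_20 a2_21 a2_22 a2_23 a2_24 a2_25; algebra)
  have a3_25: "(A ** A ** A) $ 2 $ 5 = 0"
    by (simp add: matrix_matrix_mult_def sum6 S a2_20 a2_21 a2_22 a2_23 a2_24 a2_25; algebra)
  have a3_30: "(A ** A ** A) $ 3 $ 0 = 0"
    by (simp add: matrix_matrix_mult_def sum6 S a2_30 a2_31 a2_32 a2_33 a2_34 a2_35; algebra)
  have a3_31: "(A ** A ** A) $ 3 $ 1 = (A $ 0 $ 0 * A $ 0 $ 0 * A $ 3 $ 1 + A $ 0 $ 0 * A $ 1 $ 1 * A $ 3 $ 1 - A $ 0 $ 0 * A $ 2 $ 0 * A $ 4 $ 2 + A $ 0 $ 0 * A $ 2 $ 1 * A $ 3 $ 2 + A $ 0 $ 1 * A $ 1 $ 0 * A $ 3 $ 1 + A $ 0 $ 2 * A $ 2 $ 0 * A $ 3 $ 1 - A $ 0 $ 4 * A $ 3 $ 1 * A $ 3 $ 1 - A $ 0 $ 5 * A $ 3 $ 1 * A $ 3 $ 2 + A $ 1 $ 1 * A $ 1 $ 1 * A $ 3 $ 1 - A $ 1 $ 1 * A $ 2 $ 0 * A $ 4 $ 2 + A $ 1 $ 1 * A $ 2 $ 1 * A $ 3 $ 2 + A $ 1 $ 2 * A $ 2 $ 1 * A $ 3 $ 1 - A $ 1 $ 5 * A $ 3 $ 1 * A $ 4 $ 2 - A $ 2 $ 0 * A $ 2 $ 2 * A $ 4 $ 2 + A $ 2 $ 1 * A $ 2 $ 2 * A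 $ 3 $ 2)"
    by (simp add: matrix_matrix_mult_def sum6 S a2_30 a2_31 a2_32 a2_33 a2_34 a2_35; algebra)
  have a3_32: "(A ** A ** A) $ 3 $ 2 = (A $ 0 $ 0 * A $ 0 $ 0 * A $ 3 $ 2 + A $ 0 $ 0 * A $ 1 $ 0 * A $ 4 $ 2 + A $ 0 $ 0 * A $ 1 $ 2 * A $ 3 $ 1 + A $ 0 $ 0 * A $ 2 $ 2 * A $ 3 $ 2 + A $ 0 $ 1 * A $ 1 $ 0 * A $ 3 $ 2 + A $ 0 $ 2 * A $ 2 $ 0 * A $ 3 $ 2 - A $ 0 $ 4 * A $ 3 $ 1 * A $ 3 $ 2 - A $ 0 $ 5 * A $ 3 $ 2 * A $ 3 $ 2 + A $ 1 $ 0 * A $ 1 $ 1 * A $ 4 $ 2 + A $ 1 $ 0 * A $ 2 $ 2 * A $ 4 $ 2 + A $ 1 $ 1 * A $ 1 $ 2 * A $ 3 $ 1 + A $ 1 $ 2 * A $ 2 $ 1 * A $ 3 $ 2 + A $ 1 $ 2 * A $ 2 $ 2 * A $ 3 $ 1 - A $ 1 $ 5 * A $ 3 $ 2 * A $ 4 $ 2 + A $ 2 $ 2 * A $ 2 $ 2 * A $ 3 $ 2)"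
    by (simp add: matrix_matrix_mult_def sum6 S a2_30 a2_31 a2_32 a2_33 a2_34 a2_35; algebra)
  have a3_33: "(A ** A ** A) $ 3 $ 3 = (A $ 0 $ 0 * A $ 0 $ 0 * A $ 0 $ 0 + 2 * A $ 0 $ 0 * A $ 0 $ 1 * A $ 1 $ 0 + 2 * A $ 0 $ 0 * A $ 0 $ 2 * A $ 2 $ 0 - 2 * A $ 0 $ 0 * A $ 0 $ 4 * A $ 3 $ 1 - 2 * A $ 0 $ 0 * A $ 0 $ 5 * A $ 3 $ 2 + A $ 0 $ 1 * A $ 1 $ 0 * A $ 1 $ 1 + A $ 0 $ 1 * A $ 1 $ 2 * A $ 2 $ 0 - A $ 0 $ 1 * A $ 1 $ 5 * A $ 3 $ 2 + A $ 0 $ 2 * A $ 1 $ 0 * A $ 2 $ 1 + A $ 0 $ 2 * A $ 1 $ 5 * A $ 3 $ 1 + A $ 0 $ 2 * A $ 2 $ 0 * A $ 2 $ 2 - A $ 0 $ 4 * A $ 1 $ 1 * A $ 3 $ 1 + A $ 0 $ 4 * A $ 2 $ 0 * A $ 4 $ 2 - A $ 0 $ 4 * A $ 2 $ 1 * A $ 3 $ 2 - A $ 0 $ 5 * A $ 1 $ 0 * A $ 4 $ 2 - A $ 0 $ 5 * A $ 1 $ 2 * A $ 3 $ 1 - A $ 0 $ 5 * A $ 2 $ 2 * A $ 3 $ 2)"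
    by (simp add: matrix_matrix_mult_def sum6 S a2_30 a2_31 a2_32 a2_33 a2_34 a2_35; algebra)
  have a3_34: "(A ** A ** A) $ 3 $ 4 = (A $ 0 $ 0 * A $ 0 $ 0 * A $ 1 $ 0 + A $ 0 $ 0 * A $ 1 $ 0 * A $ 1 $ 1 + A $ 0 $ 0 * A $ 1 $ 2 * A $ 2 $ 0 - A $ 0 $ 0 * A $ 1 $ 5 * A $ 3 $ 2 + A $ 0 $ 1 * A $ 1 $ 0 * A $ 1 $ 0 + A $ 0 $ 2 * A $ 1 $ 0 * A $ 2 $ 0 - A $ 0 $ 4 * A $ 1 $ 0 * A $ 3 $ 1 - A $ 0 $ 5 * A $ 1 $ 0 * A $ 3 $ 2 + A $ 1 $ 0 * A $ 1 $ 1 * A $ 1 $ 1 + A $ 1 $ 0 * A $ 1 $ 2 * A $ 2 $ 1 - A $ 1 $ 0 * A $ 1 $ 5 * A $ 4 $ 2 + A $ 1 $ 1 * A $ 1 $ 2 * A $ 2 $ 0 - A $ 1 $ 1 * A $ 1 $ 5 * A $ 3 $ 2 + A $ 1 $ 2 * A $ 2 $ 0 * A $ 2 $ 2 - A $ 1 $ 5 * A $ 2 $ 2 * A $ 3 $ 2)"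
    by (simp add: matrix_matrix_mult_def sum6 S a2_30 a2_31 a2_32 a2_33 a2_34 a2_35; algebra)
  have a3_35: "(A ** A ** A) $ 3 $ 5 = (A $ 0 $ 0 * A $ 0 $ 0 * A $ 2 $ 0 + A $ 0 $ 0 * A $ 1 $ 0 * A $ 2 $ 1 + A $ 0 $ 0 * A $ 1 $ 5 * A $ 3 $ 1 + A $ 0 $ 0 * A $ 2 $ 0 * A $ 2 $ 2 + A $ 0 $ 1 * A $ 1 $ 0 * A $ 2 $ 0 + A $ 0 $ 2 * A $ 2 $ 0 * A $ 2 $ 0 - A $ 0 $ 4 * A $ 2 $ 0 * A $ 3 $ 1 - A $ 0 $ 5 * A $ 2 $ 0 * A $ 3 $ 2 + A $ 1 $ 0 * A $ 1 $ 1 * A $ 2 $ 1 + A $ 1 $ 0 * A $ 2 $ 1 * A $ 2 $ 2 + A $ 1 $ 1 * A $ 1 $ 5 * A $ 3 $ 1 + A $ 1 $ 2 * A $ 2 $ 0 * A $ 2 $ 1 - A $ 1 $ 5 * A $ 2 $ 0 * A $ 4 $ 2 + A $ 1 $ 5 * A $ 2 $ 2 * A $ 3 $ 1 + A $ 2 $ 0 * A $ 2 $ 2 * A $ 2 $ 2)"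
    by (simp add: matrix_matrix_mult_def sum6 S a2_30 a2_31 a2_32 a2_33 a2_34 a2_35; algebra)
  have a3_40: "(A ** A ** A) $ 4 $ 0 = (- A $ 0 $ 0 * A $ 0 $ 0 * A $ 3 $ 1 - A $ 0 $ 0 * A $ 1 $ 1 * A $ 3 $ 1 + A $ 0 $ 0 * A $ 2 $ 0 * A $ 4 $ 2 - A $ 0 $ 0 * A $ 2 $ 1 * A $ 3 $ 2 - A $ 0 $ 1 * A $ 1 $ 0 * A $ 3 $ 1 - A $ 0 $ 2 * A $ 2 $ 0 * A $ 3 $ 1 + A $ 0 $ 4 * A $ 3 $ 1 * A $ 3 $ 1 + A $ 0 $ 5 * A $ 3 $ 1 * A $ 3 $ 2 - A $ 1 $ 1 * A $ 1 $ 1 * A $ 3 $ 1 + A $ 1 $ 1 * A $ 2 $ 0 * A $ 4 $ 2 - A $ 1 $ 1 * A $ 2 $ 1 * A $ 3 $ 2 - A $ 1 $ 2 * A $ 2 $ 1 * A $ 3 $ 1 + A $ 1 $ 5 * A $ 3 $ 1 * A $ 4 $ 2 + A $ 2 $ 0 * A $ 2 $ 2 * A $ 4 $ 2 - A $ 2 $ 1 * A $ 2 $ 2 * A $ 3 $ 2)"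
    by (simp add: matrix_matrix_mult_def sum6 S a2_40 a2_41 a2_42 a2_43 a2_44 a2_45; algebra)
  have a3_41: "(A ** A ** A) $ 4 $ 1 = 0"
    by (simp add: matrix_matrix_mult_def sum6 S a2_40 a2_41 a2_42 a2_43 a2_44 a2_45; algebra)
  have a3_42: "(A ** A ** A) $ 4 $ 2 = (A $ 0 $ 0 * A $ 0 $ 1 * A $ 3 $ 2 - A $ 0 $ 0 * A $ 0 $ 2 * A $ 3 $ 1 + A $ 0 $ 1 * A $ 1 $ 0 * A $ 4 $ 2 + A $ 0 $ 1 * A $ 1 $ 1 * A $ 3 $ 2 + A $ 0 $ 1 * A $ 2 $ 2 * A $ 3 $ 2 - A $ 0 $ 2 * A $ 1 $ 1 * A $ 3 $ 1 + A $ 0 $ 2 * A $ 2 $ 0 * A $ 4 $ 2 - A $ 0 $ 2 * A $ 2 $ 2 * A $ 3 $ 1 - A $ 0 $ 4 * A $ 3 $ 1 * A $ 4 $ 2 - A $ 0 $ 5 * A $ 3 $ 2 * A $ 4 $ 2 + A $ 1 $ 1 * A $ 1 $ 1 * A $ 4 $ 2 + A $ 1 $ 1 * A $ 2 $ 2 * A $ 4 $ 2 + A $ 1 $ 2 * A $ 2 $ 1 * A $ 4 $ 2 - A $ 1 $ 5 * A $ 4 $ 2 * A $ 4 $ 2 + A $ 2 $ 2 * A $ 2 $ 2 * A $ 4 $ 2)"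
    by (simp add: matrix_matrix_mult_def sum6 S a2_40 a2_41 a2_42 a2_43 a2_44 a2_45; algebra)
  have a3_43: "(A ** A ** A) $ 4 $ 3 = (A $ 0 $ 0 * A $ 0 $ 0 * A $ 0 $ 1 + A $ 0 $ 0 * A $ 0 $ 1 * A $ 1 $ 1 + A $ 0 $ 0 * A $ 0 $ 2 * A $ 2 $ 1 - A $ 0 $ 0 * A $ 0 $ 5 * A $ 4 $ 2 + A $ 0 $ 1 * A $ 0 $ 1 * A $ 1 $ 0 + A $ 0 $ 1 * A $ 0 $ 2 * A $ 2 $ 0 - A $ 0 $ 1 * A $ 0 $ 4 * A $ 3 $ 1 - A $ 0 $ 1 * A $ 0 $ 5 * A $ 3 $ 2 + A $ 0 $ 1 * A $ 1 $ 1 * A $ 1 $ 1 + A $ 0 $ 1 * A $ 1 $ 2 * A $ 2 $ 1 - A $ 0 $ 1 * A $ 1 $ 5 * A $ 4 $ 2 + A $ 0 $ 2 * A $ 1 $ 1 * A $ 2 $ 1 + A $ 0 $ 2 * A $ 2 $ 1 * A $ 2 $ 2 - A $ 0 $ 5 * A $ 1 $ 1 * A $ 4 $ 2 - A $ 0 $ 5 * A $ 2 $ 2 * A $ 4 $ 2)"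
    by (simp add: matrix_matrix_mult_def sum6 S a2_40 a2_41 a2_42 a2_43 a2_44 a2_45; algebra)
  have a3_44: "(A ** A ** A) $ 4 $ 4 = (A $ 0 $ 0 * A $ 0 $ 1 * A $ 1 $ 0 - A $ 0 $ 0 * A $ 0 $ 4 * A $ 3 $ 1 + 2 * A $ 0 $ 1 * A $ 1 $ 0 * A $ 1 $ 1 + A $ 0 $ 1 * A $ 1 $ 2 * A $ 2 $ 0 - A $ 0 $ 1 * A $ 1 $ 5 * A $ 3 $ 2 + A $ 0 $ 2 * A $ 1 $ 0 * A $ 2 $ 1 + A $ 0 $ 2 * A $ 1 $ 5 * A $ 3 $ 1 - 2 * A $ 0 $ 4 * A $ 1 $ 1 * A $ 3 $ 1 + A $ 0 $ 4 * A $ 2 $ 0 * A $ 4 $ 2 - A $ 0 $ 4 * A $ 2 $ 1 * A $ 3 $ 2 - A $ 0 $ 5 * A $ 1 $ 0 * A $ 4 $ 2 - A $ 0 $ 5 * A $ 1 $ 2 * A $ 3 $ 1 + A $ 1 $ 1 * A $ 1 $ 1 * A $ 1 $ 1 + 2 * A $ 1 $ 1 * A $ 1 $ 2 * A $ 2 $ 1 - 2 * A $ 1 $ 1 * A $ 1 $ 5 * A $ 4 $ 2 + A $ 1 $ 2 * A $ 2 $ 1 * A $ 2 $ 2 - A $ 1 $ 5 * A $ 2 $ 2 * A $ 4 $ 2)"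
    by (simp add: matrix_matrix_mult_def sum6 S a2_40 a2_41 a2_42 a2_43 a2_44 a2_45; algebra)
  have a3_45: "(A ** A ** A) $ 4 $ 5 = (A $ 0 $ 0 * A $ 0 $ 1 * A $ 2 $ 0 - A $ 0 $ 0 * A $ 0 $ 5 * A $ 3 $ 1 + A $ 0 $ 1 * A $ 1 $ 0 * A $ 2 $ 1 + A $ 0 $ 1 * A $ 1 $ 1 * A $ 2 $ 0 + A $ 0 $ 1 * A $ 2 $ 0 * A $ 2 $ 2 + A $ 0 $ 2 * A $ 2 $ 0 * A $ 2 $ 1 - A $ 0 $ 4 * A $ 2 $ 1 * A $ 3 $ 1 - A $ 0 $ 5 * A $ 1 $ 1 * A $ 3 $ 1 - A $ 0 $ 5 * A $ 2 $ 1 * A $ 3 $ 2 - A $ 0 $ 5 * A $ 2 $ 2 * A $ 3 $ 1 + A $ 1 $ 1 * A $ 1 $ 1 * A $ 2 $ 1 + A $ 1 $ 1 * A $ 2 $ 1 * A $ 2 $ 2 + A $ 1 $ 2 * A $ 2 $ 1 * A $ 2 $ 1 - A $ 1 $ 5 * A $ 2 $ 1 * A $ 4 $ 2 + A $ 2 $ 1 * A $ 2 $ 2 * A $ 2 $ 2)"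
    by (simp add: matrix_matrix_mult_def sum6 S a2_40 a2_41 a2_42 a2_43 a2_44 a2_45; algebra)
  have a3_50: "(A ** A ** A) $ 5 $ 0 = (- A $ 0 $ 0 * A $ 0 $ 0 * A $ 3 $ 2 - A $ 0 $ 0 * A $ 1 $ 0 * A $ 4 $ 2 - A $ 0 $ 0 * A $ 1 $ 2 * A $ 3 $ 1 - A $ 0 $ 0 * A $ 2 $ 2 * A $ 3 $ 2 - A $ 0 $ 1 * A $ 1 $ 0 * A $ 3 $ 2 - A $ 0 $ 2 * A $ 2 $ 0 * A $ 3 $ 2 + A $ 0 $ 4 * A $ 3 $ 1 * A $ 3 $ 2 + A $ 0 $ 5 * A $ 3 $ 2 * A $ 3 $ 2 - A $ 1 $ 0 * A $ 1 $ 1 * A $ 4 $ 2 - A $ 1 $ 0 * A $ 2 $ 2 * A $ 4 $ 2 - A $ 1 $ 1 * A $ 1 $ 2 * A $ 3 $ 1 - A $ 1 $ 2 * A $ 2 $ 1 * A $ 3 $ 2 - A $ 1 $ 2 * A $ 2 $ 2 * A $ 3 $ 1 + A $ 1 $ 5 * A $ 3 $ 2 * A $ 4 $ 2 - A $ 2 $ 2 * A $ 2 $ 2 * A $ 3 $ 2)"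
    by (simp add: matrix_matrix_mult_def sum6 S a2_50 a2_51 a2_52 a2_53 a2_54 a2_55; algebra)
  have a3_51: "(A ** A ** A) $ 5 $ 1 = (- A $ 0 $ 0 * A $ 0 $ 1 * A $ 3 $ 2 + A $ 0 $ 0 * A $ 0 $ 2 * A $ 3 $ 1 - A $ 0 $ 1 * A $ 1 $ 0 * A $ 4 $ 2 - A $ 0 $ 1 * A $ 1 $ 1 * A $ 3 $ 2 - A $ 0 $ 1 * A $ 2 $ 2 * A $ 3 $ 2 + A $ 0 $ 2 * A $ 1 $ 1 * A $ 3 $ 1 - A $ 0 $ 2 * A $ 2 $ 0 * A $ 4 $ 2 + A $ 0 $ 2 * A $ 2 $ 2 * A $ 3 $ 1 + A $ 0 $ 4 * A $ 3 $ 1 * A $ 4 $ 2 + A $ 0 $ 5 * A $ 3 $ 2 * A $ 4 $ 2 - A $ 1 $ 1 * A $ 1 $ 1 * A $ 4 $ 2 - A $ 1 $ 1 * A $ 2 $ 2 * A $ 4 $ 2 - A $ 1 $ 2 * A $ 2 $ 1 * A $ 4 $ 2 + A $ 1 $ 5 * A $ 4 $ 2 * A $ 4 $ 2 - A $ 2 $ 2 * A $ 2 $ 2 * A $ 4 $ 2)"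
    by (simp add: matrix_matrix_mult_def sum6 S a2_50 a2_51 a2_52 a2_53 a2_54 a2_55; algebra)
  have a3_52: "(A ** A ** A) $ 5 $ 2 = 0"
    by (simp add: matrix_matrix_mult_def sum6 S a2_50 a2_51 a2_52 a2_53 a2_54 a2_55; algebra)
  have a3_53: "(A ** A ** A) $ 5 $ 3 = (A $ 0 $ 0 * A $ 0 $ 0 * A $ 0 $ 2 + A $ 0 $ 0 * A $ 0 $ 1 * A $ 1 $ 2 + A $ 0 $ 0 * A $ 0 $ 2 * A $ 2 $ 2 + A $ 0 $ 0 * A $ 0 $ 4 * A $ 4 $ 2 + A $ 0 $ 1 * A $ 0 $ 2 * A $ 1 $ 0 + A $ 0 $ 1 * A $ 1 $ 1 * A $ 1 $ 2 + A $ 0 $ 1 * A $ 1 $ 2 * A $ 2 $ 2 + A $ 0 $ 2 * A $ 0 $ 2 * A $ 2 $ 0 - A $ 0 $ 2 * A $ 0 $ 4 * A $ 3 $ 1 - A $ 0 $ 2 * A $ 0 $ 5 * A $ 3 $ 2 + A $ 0 $ 2 * A $ 1 $ 2 * A $ 2 $ 1 - A $ 0 $ 2 * A $ 1 $ 5 * A $ 4 $ 2 + A $ 0 $ 2 * A $ 2 $ 2 * A $ 2 $ 2 + A $ 0 $ 4 * A $ 1 $ 1 * A $ 4 $ 2 + A $ 0 $ 4 * A $ 2 $ 2 * A $ 4 $ 2)"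
    by (simp add: matrix_matrix_mult_def sum6 S a2_50 a2_51 a2_52 a2_53 a2_54 a2_55; algebra)
  have a3_54: "(A ** A ** A) $ 5 $ 4 = (A $ 0 $ 0 * A $ 0 $ 2 * A $ 1 $ 0 - A $ 0 $ 0 * A $ 0 $ 4 * A $ 3 $ 2 + A $ 0 $ 1 * A $ 1 $ 0 * A $ 1 $ 2 + A $ 0 $ 2 * A $ 1 $ 0 * A $ 1 $ 1 + A $ 0 $ 2 * A $ 1 $ 0 * A $ 2 $ 2 + A $ 0 $ 2 * A $ 1 $ 2 * A $ 2 $ 0 - A $ 0 $ 4 * A $ 1 $ 1 * A $ 3 $ 2 - A $ 0 $ 4 * A $ 1 $ 2 * A $ 3 $ 1 - A $ 0 $ 4 * A $ 2 $ 2 * A $ 3 $ 2 - A $ 0 $ 5 * A $ 1 $ 2 * A $ 3 $ 2 + A $ 1 $ 1 * A $ 1 $ 1 * A $ 1 $ 2 + A $ 1 $ 1 * A $ 1 $ 2 * A $ 2 $ 2 + A $ 1 $ 2 * A $ 1 $ 2 * A $ 2 $ 1 - A $ 1 $ 2 * A $ 1 $ 5 * A $ 4 $ 2 + A $ 1 $ 2 * A $ 2 $ 2 * A $ 2 $ 2)"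
    by (simp add: matrix_matrix_mult_def sum6 S a2_50 a2_51 a2_52 a2_53 a2_54 a2_55; algebra)
  have a3_55: "(A ** A ** A) $ 5 $ 5 = (A $ 0 $ 0 * A $ 0 $ 2 * A $ 2 $ 0 - A $ 0 $ 0 * A $ 0 $ 5 * A $ 3 $ 2 + A $ 0 $ 1 * A $ 1 $ 2 * A $ 2 $ 0 - A $ 0 $ 1 * A $ 1 $ 5 * A $ 3 $ 2 + A $ 0 $ 2 * A $ 1 $ 0 * A $ 2 $ 1 + A $ 0 $ 2 * A $ 1 $ 5 * A $ 3 $ 1 + 2 * A $ 0 $ 2 * A $ 2 $ 0 * A $ 2 $ 2 + A $ 0 $ 4 * A $ 2 $ 0 * A $ 4 $ 2 - A $ 0 $ 4 * A $ 2 $ 1 * A $ 3 $ 2 - A $ 0 $ 5 * A $ 1 $ 0 * A $ 4 $ 2 - A $ 0 $ 5 * A $ 1 $ 2 * A $ 3 $ 1 - 2 * A $ 0 $ 5 * A $ 2 $ 2 * A $ 3 $ 2 + A $ 1 $ 1 * A $ 1 $ 2 * A $ 2 $ 1 - A $ 1 $ 1 * A $ 1 $ 5 * A $ 4 $ 2 + 2 * A $ 1 $ 2 * A $ 2 $ 1 * A $ 2 $ 2 - 2 * A $ 1 $ 5 * A $ 2 $ 2 * A $ 4 $ 2 + A $ 2 $ 2 * A $ 2 $ 2 * A $ 2 $ 2)"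
    by (simp add: matrix_matrix_mult_def sum6 S a2_50 a2_51 a2_52 a2_53 a2_54 a2_55; algebra)
  have t1: "trace A = (2 * A $ 0 $ 0 + 2 * A $ 1 $ 1 + 2 * A $ 2 $ 2)"
    by (simp add: trace_def sum6 S)
  have t2: "trace (A ** A) = (2 * A $ 0 $ 0 * A $ 0 $ 0 + 4 * A $ 0 $ 1 * A $ 1 $ 0 + 4 * A $ 0 $ 2 * A $ 2 $ 0 - 4 * A $ 0 $ 4 * A $ 3 $ 1 - 4 * A $ 0 $ 5 * A $ 3 $ 2 + 2 * A $ 1 $ 1 * A $ 1 $ 1 + 4 * A $ 1 $ 2 * A $ 2 $ 1 - 4 * A $ 1 $ 5 * A $ 4 $ 2 + 2 * A $ 2 $ 2 * A $ 2 $ 2)"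
    by (simp add: trace_def sum6 a2_00 a2_11 a2_22 a2_33 a2_44 a2_55; algebra)
  have t3: "trace (A ** A ** A) = (2 * A $ 0 $ 0 * A $ 0 $ 0 * A $ 0 $ 0 + 6 * A $ 0 $ 0 * A $ 0 $ 1 * A $ 1 $ 0 + 6 * A $ 0 $ 0 * A $ 0 $ 2 * A $ 2 $ 0 - 6 * A $ 0 $ 0 * A $ 0 $ 4 * A $ 3 $ 1 - 6 * A $ 0 $ 0 * A $ 0 $ 5 * A $ 3 $ 2 + 6 * A $ 0 $ 1 * A $ 1 $ 0 * A $ 1 $ 1 + 6 * A $ 0 $ 1 * A $ 1 $ 2 * A $ 2 $ 0 - 6 * A $ 0 $ 1 * A $ 1 $ 5 * A $ 3 $ 2 + 6 * A $ 0 $ 2 * A $ 1 $ 0 * A $ 2 $ 1 + 6 * A $ 0 $ 2 * A $ 1 $ 5 * A $ 3 $ 1 + 6 * A $ 0 $ 2 * A $ 2 $ 0 * A $ 2 $ 2 - 6 * A $ 0 $ 4 * A $ 1 $ 1 * A $ 3 $ 1 + 6 * A $ 0 $ 4 * A $ 2 $ 0 * A $ 4 $ 2 - 6 * A $ 0 $ 4 * A $ 2 $ 1 * A $ 3 $ 2 - 6 * A $ 0 $ 5 * A $ 1 $ 0 * A $ 4 $ 2 - 6 * A $ 0 $ 5 * A $ 1 $ 2 * A $ 3 $ 1 - 6 * A $ 0 $ 5 * A $ 2 $ 2 * A $ 3 $ 2 + 2 * A $ 1 $ 1 * A $ 1 $ 1 * A $ 1 $ 1 + 6 * A $ 1 $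 1 * A $ 1 $ 2 * A $ 2 $ 1 - 6 * A $ 1 $ 1 * A $ 1 $ 5 * A $ 4 $ 2 + 6 * A $ 1 $ 2 * A $ 2 $ 1 * A $ 2 $ 2 - 6 * A $ 1 $ 5 * A $ 2 $ 2 * A $ 4 $ 2 + 2 * A $ 2 $ 2 * A $ 2 $ 2 * A $ 2 $ 2)"
    by (simp add: trace_def sum6 a3_00 a3_11 a3_22 a3_33 a3_44 a3_55; algebra)
  have c1: "ce1 A = (A $ 0 $ 0 + A $ 1 $ 1 + A $ 2 $ 2)"
    by (simp add: ce1_def t1)
  have s2: "cs2 A = (A $ 0 $ 0 * A $ 0 $ 0 + 2 * A $ 0 $ 1 * A $ 1 $ 0 + 2 * A $ 0 $ 2 * A $ 2 $ 0 - 2 * A $ 0 $ 4 * A $ 3 $ 1 - 2 * A $ 0 $ 5 * A $ 3 $ 2 + A $ 1 $ 1 * A $ 1 $ 1 + 2 * A $ 1 $ 2 * A $ 2 $ 1 - 2 * A $ 1 $ 5 * A $ 4 $ 2 + A $ 2 $ 2 * A $ 2 $ 2)"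
    by (simp add: cs2_def t2)
  have s3: "cs3 A = (A $ 0 $ 0 * A $ 0 $ 0 * A $ 0 $ 0 + 3 * A $ 0 $ 0 * A $ 0 $ 1 * A $ 1 $ 0 + 3 * A $ 0 $ 0 * A $ 0 $ 2 * A $ 2 $ 0 - 3 * A $ 0 $ 0 * A $ 0 $ 4 * A $ 3 $ 1 - 3 * A $ 0 $ 0 * A $ 0 $ 5 * A $ 3 $ 2 + 3 * A $ 0 $ 1 * A $ 1 $ 0 * A $ 1 $ 1 + 3 * A $ 0 $ 1 * A $ 1 $ 2 * A $ 2 $ 0 - 3 * A $ 0 $ 1 * A $ 1 $ 5 * A $ 3 $ 2 + 3 * A $ 0 $ 2 * A $ 1 $ 0 * A $ 2 $ 1 + 3 * A $ 0 $ 2 * A $ 1 $ 5 * A $ 3 $ 1 + 3 * A $ 0 $ 2 * A $ 2 $ 0 * A $ 2 $ 2 - 3 * A $ 0 $ 4 * A $ 1 $ 1 * A $ 3 $ 1 + 3 * A $ 0 $ 4 * A $ 2 $ 0 * A $ 4 $ 2 - 3 * A $ 0 $ 4 * A $ 2 $ 1 * A $ 3 $ 2 - 3 * A $ 0 $ 5 * A $ 1 $ 0 * A $ 4 $ 2 - 3 * A $ 0 $ 5 * A $ 1 $ 2 * A $ 3 $ 1 - 3 * A $ 0 $ 5 * A $ 2 $ 2 * A $ 3 $ 2 + A $ 1 $ 1 * A $ 1 $ 1 * A $ 1 $ 1 + 3 * A $ 1 $ 1 * A $ 1 $ 2 * A $ 2 $ 1 - 3 * A $ 1 $ 1 * A $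 1 $ 5 * A $ 4 $ 2 + 3 * A $ 1 $ 2 * A $ 2 $ 1 * A $ 2 $ 2 - 3 * A $ 1 $ 5 * A $ 2 $ 2 * A $ 4 $ 2 + A $ 2 $ 2 * A $ 2 $ 2 * A $ 2 $ 2)"
    by (simp add: cs3_def t3)
  have c2: "ce2 A = (A $ 0 $ 0 * A $ 1 $ 1 + A $ 0 $ 0 * A $ 2 $ 2 - A $ 0 $ 1 * A $ 1 $ 0 - A $ 0 $ 2 * A $ 2 $ 0 + A $ 0 $ 4 * A $ 3 $ 1 + A $ 0 $ 5 * A $ 3 $ 2 + A $ 1 $ 1 * A $ 2 $ 2 - A $ 1 $ 2 * A $ 2 $ 1 + A $ 1 $ 5 * A $ 4 $ 2)"
    unfolding ce2_def c1 s2 by algebra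
  have c3: "ce3 A = (A $ 0 $ 0 * A $ 1 $ 1 * A $ 2 $ 2 - A $ 0 $ 0 * A $ 1 $ 2 * A $ 2 $ 1 + A $ 0 $ 0 * A $ 1 $ 5 * A $ 4 $ 2 - A $ 0 $ 1 * A $ 1 $ 0 * A $ 2 $ 2 + A $ 0 $ 1 * A $ 1 $ 2 * A $ 2 $ 0 - A $ 0 $ 1 * A $ 1 $ 5 * A $ 3 $ 2 + A $ 0 $ 2 * A $ 1 $ 0 * A $ 2 $ 1 - A $ 0 $ 2 * A $ 1 $ 1 * A $ 2 $ 0 + A $ 0 $ 2 * A $ 1 $ 5 * A $ 3 $ 1 + A $ 0 $ 4 * A $ 2 $ 0 * A $ 4 $ 2 - A $ 0 $ 4 * A $ 2 $ 1 * A $ 3 $ 2 + A $ 0 $ 4 * A $ 2 $ 2 * A $ 3 $ 1 - A $ 0 $ 5 * A $ 1 $ 0 * A $ 4 $ 2 + A $ 0 $ 5 * A $ 1 $ 1 * A $ 3 $ 2 - A $ 0 $ 5 * A $ 1 $ 2 * A $ 3 $ 1)"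
    unfolding ce3_def c1 s2 s3 by algebra
  have E00: "(A ** A ** A) $ 0 $ 0 = (ce1 A *\<^sub>R (A ** A) - ce2 A *\<^sub>R A + ce3 A *\<^sub>R mat 1) $ 0 $ 0"
    unfolding vector_minus_component vector_add_component vector_scaleR_component a3_00 a2_00 c1 c2 c3 by (simp add: mat_def S; algebra)
  have E01: "(A ** A ** A) $ 0 $ 1 = (ce1 A *\<^sub>R (A ** A) - ce2 A *\<^sub>R A + ce3 A *\<^sub>R mat 1) $ 0 $ 1"
    unfolding vector_minus_component vector_add_component vector_scaleR_component a3_01 a2_01 c1 c2 c3 by (simp add: mat_def S; algebra)
  have E02: "(A ** A ** A) $ 0 $ 2 = (ce1 A *\<^sub>R (A ** A) - ce2 A *\<^sub>R A + ce3 A *\<^sub>R mat 1) $ 0 $ 2"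
    unfolding vector_minus_component vector_add_component vector_scaleR_component a3_02 a2_02 c1 c2 c3 by (simp add: mat_def S; algebra)
  have E03: "(A ** A ** A) $ 0 $ 3 = (ce1 A *\<^sub>R (A ** A) - ce2 A *\<^sub>R A + ce3 A *\<^sub>R mat 1) $ 0 $ 3"
    unfolding vector_minus_component vector_add_component vector_scaleR_component a3_03 a2_03 c1 c2 c3 by (simp add: mat_def S; algebra)
  have E04: "(A ** A ** A) $ 0 $ 4 = (ce1 A *\<^sub>R (A ** A) - ce2 A *\<^sub>R A + ce3 A *\<^sub>R mat 1) $ 0 $ 4"
    unfolding vector_minus_component vector_add_component vector_scaleR_component a3_04 a2_04 c1 c2 c3 by (simp add: mat_def S; algebra)
  have E05: "(A ** A ** A) $ 0 $ 5 = (ce1 A *\<^sub>R (A ** A) - ce2 A *\<^sub>R A + ce3 A *\<^sub>R mat 1) $ 0 $ 5"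
    unfolding vector_minus_component vector_add_component vector_scaleR_component a3_05 a2_05 c1 c2 c3 by (simp add: mat_def S; algebra)
  have E10: "(A ** A ** A) $ 1 $ 0 = (ce1 A *\<^sub>R (A ** A) - ce2 A *\<^sub>R A + ce3 A *\<^sub>R mat 1) $ 1 $ 0"
    unfolding vector_minus_component vector_add_component vector_scaleR_component a3_10 a2_10 c1 c2 c3 by (simp add: mat_def S; algebra)
  have E11: "(A ** A ** A) $ 1 $ 1 = (ce1 A *\<^sub>R (A ** A) - ce2 A *\<^sub>R A + ce3 A *\<^sub>R mat 1) $ 1 $ 1"
    unfolding vector_minus_component vector_add_component vector_scaleR_component a3_11 a2_11 c1 c2 c3 by (simp add: mat_def S; algebra)
  have E12: "(A ** A ** A) $ 1 $ 2 = (ce1 A *\<^sub>R (A ** A) - ce2 A *\<^sub>R A + ce3 A *\<^sub>R mat 1) $ 1 $ 2"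
    unfolding vector_minus_component vector_add_component vector_scaleR_component a3_12 a2_12 c1 c2 c3 by (simp add: mat_def S; algebra)
  have E13: "(A ** A ** A) $ 1 $ 3 = (ce1 A *\<^sub>R (A ** A) - ce2 A *\<^sub>R A + ce3 A *\<^sub>R mat 1) $ 1 $ 3"
    unfolding vector_minus_component vector_add_component vector_scaleR_component a3_13 a2_13 c1 c2 c3 by (simp add: mat_def S; algebra)
  have E14: "(A ** A ** A) $ 1 $ 4 = (ce1 A *\<^sub>R (A ** A) - ce2 A *\<^sub>R A + ce3 A *\<^sub>R mat 1) $ 1 $ 4"
    unfolding vector_minus_component vector_add_component vector_scaleR_component a3_14 a2_14 c1 c2 c3 by (simp add: mat_def S; algebra)
  have E15: "(A ** A ** A) $ 1 $ 5 = (ce1 A *\<^sub>R (A ** A) - ce2 A *\<^sub>R A + ce3 A *\<^sub>R mat 1) $ 1 $ 5"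
    unfolding vector_minus_component vector_add_component vector_scaleR_component a3_15 a2_15 c1 c2 c3 by (simp add: mat_def S; algebra)
  have E20: "(A ** A ** A) $ 2 $ 0 = (ce1 A *\<^sub>R (A ** A) - ce2 A *\<^sub>R A + ce3 A *\<^sub>R mat 1) $ 2 $ 0"
    unfolding vector_minus_component vector_add_component vector_scaleR_component a3_20 a2_20 c1 c2 c3 by (simp add: mat_def S; algebra)
  have E21: "(A ** A ** A) $ 2 $ 1 = (ce1 A *\<^sub>R (A ** A) - ce2 A *\<^sub>R A + ce3 A *\<^sub>R mat 1) $ 2 $ 1"
    unfolding vector_minus_component vector_add_component vector_scaleR_component a3_21 a2_21 c1 c2 c3 by (simp add: mat_def S; algebra)
  have E22: "(A ** A ** A) $ 2 $ 2 = (ce1 A *\<^sub>R (A ** A) - ce2 A *\<^sub>R A + ce3 A *\<^sub>R mat 1) $ 2 $ 2"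
    unfolding vector_minus_component vector_add_component vector_scaleR_component a3_22 a2_22 c1 c2 c3 by (simp add: mat_def S; algebra)
  have E23: "(A ** A ** A) $ 2 $ 3 = (ce1 A *\<^sub>R (A ** A) - ce2 A *\<^sub>R A + ce3 A *\<^sub>R mat 1) $ 2 $ 3"
    unfolding vector_minus_component vector_add_component vector_scaleR_component a3_23 a2_23 c1 c2 c3 by (simp add: mat_def S; algebra)
  have E24: "(A ** A ** A) $ 2 $ 4 = (ce1 A *\<^sub>R (A ** A) - ce2 A *\<^sub>R A + ce3 A *\<^sub>R mat 1) $ 2 $ 4"
    unfolding vector_minus_component vector_add_component vector_scaleR_component a3_24 a2_24 c1 c2 c3 by (simp add: mat_def S; algebra)
  have E25: "(A ** A ** A) $ 2 $ 5 = (ce1 A *\<^sub>R (A ** A) - ce2 A *\<^sub>R A + ce3 A *\<^sub>R mat 1) $ 2 $ 5"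
    unfolding vector_minus_component vector_add_component vector_scaleR_component a3_25 a2_25 c1 c2 c3 by (simp add: mat_def S; algebra)
  have E30: "(A ** A ** A) $ 3 $ 0 = (ce1 A *\<^sub>R (A ** A) - ce2 A *\<^sub>R A + ce3 A *\<^sub>R mat 1) $ 3 $ 0"
    unfolding vector_minus_component vector_add_component vector_scaleR_component a3_30 a2_30 c1 c2 c3 by (simp add: mat_def S; algebra)
  have E31: "(A ** A ** A) $ 3 $ 1 = (ce1 A *\<^sub>R (A ** A) - ce2 A *\<^sub>R A + ce3 A *\<^sub>R mat 1) $ 3 $ 1"
    unfolding vector_minus_component vector_add_component vector_scaleR_component a3_31 a2_31 c1 c2 c3 by (simp add: mat_def S; algebra)
  have E32: "(A ** A ** A) $ 3 $ 2 = (ce1 A *\<^sub>R (A ** A) - ce2 A *\<^sub>R A + ce3 A *\<^sub>R mat 1) $ 3 $ 2"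
    unfolding vector_minus_component vector_add_component vector_scaleR_component a3_32 a2_32 c1 c2 c3 by (simp add: mat_def S; algebra)
  have E33: "(A ** A ** A) $ 3 $ 3 = (ce1 A *\<^sub>R (A ** A) - ce2 A *\<^sub>R A + ce3 A *\<^sub>R mat 1) $ 3 $ 3"
    unfolding vector_minus_component vector_add_component vector_scaleR_component a3_33 a2_33 c1 c2 c3 by (simp add: mat_def S; algebra)
  have E34: "(A ** A ** A) $ 3 $ 4 = (ce1 A *\<^sub>R (A ** A) - ce2 A *\<^sub>R A + ce3 A *\<^sub>R mat 1) $ 3 $ 4"
    unfolding vector_minus_component vector_add_component vector_scaleR_component a3_34 a2_34 c1 c2 c3 by (simp add: mat_def S; algebra)
  have E35: "(A ** A ** A) $ 3 $ 5 = (ce1 A *\<^sub>R (A ** A) - ce2 A *\<^sub>R A + ce3 A *\<^sub>R mat 1) $ 3 $ 5"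
    unfolding vector_minus_component vector_add_component vector_scaleR_component a3_35 a2_35 c1 c2 c3 by (simp add: mat_def S; algebra)
  have E40: "(A ** A ** A) $ 4 $ 0 = (ce1 A *\<^sub>R (A ** A) - ce2 A *\<^sub>R A + ce3 A *\<^sub>R mat 1) $ 4 $ 0"
    unfolding vector_minus_component vector_add_component vector_scaleR_component a3_40 a2_40 c1 c2 c3 by (simp add: mat_def S; algebra)
  have E41: "(A ** A ** A) $ 4 $ 1 = (ce1 A *\<^sub>R (A ** A) - ce2 A *\<^sub>R A + ce3 A *\<^sub>R mat 1) $ 4 $ 1"
    unfolding vector_minus_component vector_add_component vector_scaleR_component a3_41 a2_41 c1 c2 c3 by (simp add: mat_def S; algebra)
  have E42: "(A ** A ** A) $ 4 $ 2 = (ce1 A *\<^sub>R (A ** A) - ce2 A *\<^sub>R A + ce3 A *\<^sub>R mat 1) $ 4 $ 2"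
    unfolding vector_minus_component vector_add_component vector_scaleR_component a3_42 a2_42 c1 c2 c3 by (simp add: mat_def S; algebra)
  have E43: "(A ** A ** A) $ 4 $ 3 = (ce1 A *\<^sub>R (A ** A) - ce2 A *\<^sub>R A + ce3 A *\<^sub>R mat 1) $ 4 $ 3"
    unfolding vector_minus_component vector_add_component vector_scaleR_component a3_43 a2_43 c1 c2 c3 by (simp add: mat_def S; algebra)
  have E44: "(A ** A ** A) $ 4 $ 4 = (ce1 A *\<^sub>R (A ** A) - ce2 A *\<^sub>R A + ce3 A *\<^sub>R mat 1) $ 4 $ 4"
    unfolding vector_minus_component vector_add_component vector_scaleR_component a3_44 a2_44 c1 c2 c3 by (simp add: mat_def S; algebra)
  have E45: "(A ** A ** A) $ 4 $ 5 = (ce1 A *\<^sub>R (A ** A) - ce2 A *\<^sub>R A + ce3 A *\<^sub>R mat 1) $ 4 $ 5"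
    unfolding vector_minus_component vector_add_component vector_scaleR_component a3_45 a2_45 c1 c2 c3 by (simp add: mat_def S; algebra)
  have E50: "(A ** A ** A) $ 5 $ 0 = (ce1 A *\<^sub>R (A ** A) - ce2 A *\<^sub>R A + ce3 A *\<^sub>R mat 1) $ 5 $ 0"
    unfolding vector_minus_component vector_add_component vector_scaleR_component a3_50 a2_50 c1 c2 c3 by (simp add: mat_def S; algebra)
  have E51: "(A ** A ** A) $ 5 $ 1 = (ce1 A *\<^sub>R (A ** A) - ce2 A *\<^sub>R A + ce3 A *\<^sub>R mat 1) $ 5 $ 1"
    unfolding vector_minus_component vector_add_component vector_scaleR_component a3_51 a2_51 c1 c2 c3 by (simp add: mat_def S; algebra)
  have E52: "(A ** A ** A) $ 5 $ 2 = (ce1 A *\<^sub>R (A ** A) - ce2 A *\<^sub>R A + ce3 A *\<^sub>R mat 1) $ 5 $ 2"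
    unfolding vector_minus_component vector_add_component vector_scaleR_component a3_52 a2_52 c1 c2 c3 by (simp add: mat_def S; algebra)
  have E53: "(A ** A ** A) $ 5 $ 3 = (ce1 A *\<^sub>R (A ** A) - ce2 A *\<^sub>R A + ce3 A *\<^sub>R mat 1) $ 5 $ 3"
    unfolding vector_minus_component vector_add_component vector_scaleR_component a3_53 a2_53 c1 c2 c3 by (simp add: mat_def S; algebra)
  have E54: "(A ** A ** A) $ 5 $ 4 = (ce1 A *\<^sub>R (A ** A) - ce2 A *\<^sub>R A + ce3 A *\<^sub>R mat 1) $ 5 $ 4"
    unfolding vector_minus_component vector_add_component vector_scaleR_component a3_54 a2_54 c1 c2 c3 by (simp add: mat_def S; algebra)
  have E55: "(A ** A ** A) $ 5 $ 5 = (ce1 A *\<^sub>R (A ** A) - ce2 A *\<^sub>R A + ce3 A *\<^sub>R mat 1) $ 5 $ 5"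
    unfolding vector_minus_component vector_add_component vector_scaleR_component a3_55 a2_55 c1 c2 c3 by (simp add: mat_def S; algebra)
  have E: "\<And>i j. (A ** A ** A) $ i $ j = (ce1 A *\<^sub>R (A ** A) - ce2 A *\<^sub>R A + ce3 A *\<^sub>R mat 1) $ i $ j"
  proof -
    fix i j :: 6
    show "(A ** A ** A) $ i $ j = (ce1 A *\<^sub>R (A ** A) - ce2 A *\<^sub>R A + ce3 A *\<^sub>R mat 1) $ i $ j"
      using exhaust_6[of i] exhaust_6[of j]
      by (elim disjE; simp only: E00 E01 E02 E03 E04 E05 E10 E11 E12 E13 E14 E15 E20 E21 E22 E23 E24 E25 E30 E31 E32 E33 E34 E35 E40 E41 E42 E43 E44 E45 E50 E51 E52 E53 E54 E55)
  qed
  show ?thesis by (simp add: vec_eq_iff E)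
qed

lemma grad_eqI:
  fixes f :: "real^'n \<Rightarrow> real"
  assumes "(f has_derivative (\<lambda>h. h \<bullet> D)) (at x)"
  shows "grad f x = D"
proof -
  have u: "D' = D" if "(f has_derivative (\<lambda>h. h \<bullet> D')) (at x)" for D'
  proof -
    have e: "(\<lambda>h. h \<bullet> D') = (\<lambda>h. h \<bullet> D)" using has_derivative_unique[OF that assms] .
    have "(D' - D) \<bullet> D' = (D' - D) \<bullet> D" using fun_cong[OF e, of "D' - D"] by (simp only:)
    then have "(D' - D) \<bullet> (D' - D) = 0" by (simp only: inner_diff_right diff_self)
    then show ?thesis by simp
  qed
  show ?thesis unfolding grad_def gderiv_def
  proof (rule the_equality)
    show "(f has_derivative (\<lambda>h. h \<bullet> D)) (at x)" by (rule assms)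
    show "\<And>D'. (f has_derivative (\<lambda>h. h \<bullet> D')) (at x) \<Longrightarrow> D' = D" by (rule u)
  qed
qed

lemma jac_eqI:
  fixes f :: "real^'n \<Rightarrow> real^'m"
  assumes "(f has_derivative (\<lambda>h. M *v h)) (at x)"
  shows "jac f x = M"
  unfolding jac_def using frechet_derivative_at[OF assms] by (metis matrix_of_matrix_vector_mul)

lemma has_derivative_vecI:
  fixes f :: "real^'n \<Rightarrow> real^'m"
  assumes "\<And>i. ((\<lambda>x. f x $ i) has_derivative (\<lambda>h. f' h $ i)) (at a)"
  shows "(f has_derivative f') (at a)"
  using assms by (subst has_derivative_componentwise_within) (auto simp: Basis_vec_def inner_axis)

lemma vn: "((\<lambda>x. x $ j) has_derivative (\<lambda>h. h $ j)) F"
  by (rule bounded_linear_imp_has_derivative[OF bounded_linear_vec_nth])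

lemma quad_deriv:
  fixes x :: "real^'n"
  shows "((\<lambda>x. \<Sum>j\<in>UNIV. \<Sum>k\<in>UNIV. d j k * x$j * x$k) has_derivative
     (\<lambda>h. \<Sum>j\<in>UNIV. \<Sum>k\<in>UNIV. d j k * (h$j * x$k + x$j * h$k))) (at x)"
proof -
  have "((\<lambda>x. \<Sum>j\<in>UNIV. \<Sum>k\<in>UNIV. d j k * x$j * x$k) has_derivative
     (\<lambda>h. \<Sum>j\<in>UNIV. \<Sum>k\<in>UNIV. d j k * x$j * h$k + d j k * h$j * x$k)) (at x)"
    by (rule has_derivative_sum, rule has_derivative_sum, rule has_derivative_mult[OF has_derivative_mult_right[OF vn] vn])
  moreover have "(\<lambda>h. \<Sum>j\<in>UNIV. \<Sum>k\<in>UNIV. d j k * x$j * h$k + d j k * h$j * x$k) =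
     (\<lambda>h. \<Sum>j\<in>UNIV. \<Sum>k\<in>UNIV. d j k * (h$j * x$k + x$j * h$k))"
    by (rule ext, rule sum.cong[OF refl], rule sum.cong[OF refl]) (simp add: algebra_simps)
  ultimately show ?thesis by (simp only:)
qed

lemma quad_deriv_eq:
  fixes x h :: "real^'n"
  shows "(\<Sum>j\<in>UNIV. \<Sum>k\<in>UNIV. d j k * (h$j * x$k + x$j * h$k)) = (\<Sum>b\<in>UNIV. h$b * (\<Sum>k\<in>UNIV. (d b k + d k b) * x$k))"
proof -
  have A0: "(\<Sum>j\<in>UNIV. \<Sum>k\<in>UNIV. d j k * (h$j * x$k)) = (\<Sum>j\<in>UNIV. \<Sum>k\<in>UNIV. h$j * (d j k * x$k))"
    by (rule sum.cong[OF refl], rule sum.cong[OF refl]) (simp only: mult_ac)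
  have A: "(\<Sum>j\<in>UNIV. \<Sum>k\<in>UNIV. d j k * (h$j * x$k)) = (\<Sum>b\<in>UNIV. h$b * (\<Sum>k\<in>UNIV. d b k * x$k))"
    unfolding A0 by (simp only: sum_distrib_left)
  have B0: "(\<Sum>j\<in>UNIV. \<Sum>k\<in>UNIV. d j k * (x$j * h$k)) = (\<Sum>k\<in>UNIV. \<Sum>j\<in>UNIV. d j k * (x$j * h$k))"
    by (rule sum.swap)
  have B1: "(\<Sum>k\<in>UNIV. \<Sum>j\<in>UNIV. d j k * (x$j * h$k)) = (\<Sum>k\<in>UNIV. \<Sum>j\<in>UNIV. h$k * (d j k * x$j))"
    by (rule sum.cong[OF refl], rule sum.cong[OF refl]) (simp only: mult_ac)
  have B: "(\<Sum>k\<in>UNIV. \<Sum>j\<in>UNIV. d j k * (x$j * h$k)) = (\<Sum>b\<in>UNIV. h$b * (\<Sum>k\<in>UNIV. d k b * x$k))"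
    unfolding B1 by (simp only: sum_distrib_left)
  have L: "(\<Sum>j\<in>UNIV. \<Sum>k\<in>UNIV. d j k * (h$j * x$k + x$j * h$k)) =
     (\<Sum>j\<in>UNIV. \<Sum>k\<in>UNIV. d j k * (h$j * x$k)) + (\<Sum>j\<in>UNIV. \<Sum>k\<in>UNIV. d j k * (x$j * h$k))"
    by (simp only: distrib_left sum.distrib)
  have R: "(\<Sum>b\<in>UNIV. h$b * (\<Sum>k\<in>UNIV. (d b k + d k b) * x$k)) =
     (\<Sum>b\<in>UNIV. h$b * (\<Sum>k\<in>UNIV. d b k * x$k)) + (\<Sum>b\<in>UNIV. h$b * (\<Sum>k\<in>UNIV. d k b * x$k))"
    by (simp only: distrib_left distrib_right sum.distrib)
  show ?thesis unfolding L R A B0 B ..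
qed

lemma cubic_deriv:
  fixes x :: "real^'n"
  shows "((\<lambda>x. \<Sum>i\<in>UNIV. \<Sum>j\<in>UNIV. \<Sum>k\<in>UNIV. c i j k * x$i * x$j * x$k) has_derivative
     (\<lambda>h. \<Sum>i\<in>UNIV. \<Sum>j\<in>UNIV. \<Sum>k\<in>UNIV. c i j k * (h$i * x$j * x$k + x$i * h$j * x$k + x$i * x$j * h$k))) (at x)"
proof -
  have "((\<lambda>x. \<Sum>i\<in>UNIV. \<Sum>j\<in>UNIV. \<Sum>k\<in>UNIV. c i j k * x$i * x$j * x$k) has_derivative
     (\<lambda>h. \<Sum>i\<in>UNIV. \<Sum>j\<in>UNIV. \<Sum>k\<in>UNIV. c i j k * x $ i * x $ j * h $ k + (c i j k * x $ i * h $ j + c i j k * h $ i * x $ j) * x $ k)) (at x)"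
    by (rule has_derivative_sum, rule has_derivative_sum, rule has_derivative_sum,
        rule has_derivative_mult[OF has_derivative_mult[OF has_derivative_mult_right[OF vn] vn] vn])
  moreover have "(\<lambda>h. \<Sum>i\<in>UNIV. \<Sum>j\<in>UNIV. \<Sum>k\<in>UNIV. c i j k * x $ i * x $ j * h $ k + (c i j k * x $ i * h $ j + c i j k * h $ i * x $ j) * x $ k) =
    (\<lambda>h. \<Sum>i\<in>UNIV. \<Sum>j\<in>UNIV. \<Sum>k\<in>UNIV. c i j k * (h$i * x$j * x$k + x$i * h$j * x$k + x$i * x$j * h$k))"
    by (intro ext sum.cong refl) (simp add: algebra_simps)
  ultimately show ?thesis by simp
qed

lemma cubic_deriv_eq:
  fixes x h :: "real^'n"
  shows "(\<Sum>i\<in>UNIV. \<Sum>j\<in>UNIV. \<Sum>k\<in>UNIV. c i j k * (h$i * x$j * x$k + x$i * h$j * x$k + x$i * x$j * h$k))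
    = (\<Sum>a\<in>UNIV. h$a * ((\<Sum>j\<in>UNIV. \<Sum>k\<in>UNIV. c a j k * x$j * x$k) + (\<Sum>i\<in>UNIV. \<Sum>k\<in>UNIV. c i a k * x$i * x$k)
         + (\<Sum>i\<in>UNIV. \<Sum>j\<in>UNIV. c i j a * x$i * x$j)))"
proof -
  have 10: "(\<Sum>i\<in>UNIV. \<Sum>j\<in>UNIV. \<Sum>k\<in>UNIV. c i j k * (h$i * x$j * x$k)) = (\<Sum>i\<in>UNIV. \<Sum>j\<in>UNIV. \<Sum>k\<in>UNIV. h$i * (c i j k * x$j * x$k))"
    by (rule sum.cong[OF refl], rule sum.cong[OF refl], rule sum.cong[OF refl]) (simp only: mult_ac)
  have 1: "(\<Sum>i\<in>UNIV. \<Sum>j\<in>UNIV. \<Sum>k\<in>UNIV. c i j k * (h$i * x$j * x$k)) = (\<Sum>a\<in>UNIV. h$a * (\<Sum>j\<in>UNIV. \<Sum>k\<in>UNIV. c a j k * x$j * x$k))"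
    unfolding 10 by (simp only: sum_distrib_left)
  have 20: "(\<Sum>i\<in>UNIV. \<Sum>j\<in>UNIV. \<Sum>k\<in>UNIV. c i j k * (x$i * h$j * x$k)) = (\<Sum>j\<in>UNIV. \<Sum>i\<in>UNIV. \<Sum>k\<in>UNIV. c i j k * (x$i * h$j * x$k))"
    by (rule sum.swap)
  have 21: "(\<Sum>j\<in>UNIV. \<Sum>i\<in>UNIV. \<Sum>k\<in>UNIV. c i j k * (x$i * h$j * x$k)) = (\<Sum>j\<in>UNIV. \<Sum>i\<in>UNIV. \<Sum>k\<in>UNIV. h$j * (c i j k * x$i * x$k))"
    by (rule sum.cong[OF refl], rule sum.cong[OF refl], rule sum.cong[OF refl]) (simp only: mult_ac)
  have 2: "(\<Sum>j\<in>UNIV. \<Sum>i\<in>UNIV. \<Sum>k\<in>UNIV. c i j k * (x$i * h$j * x$k)) = (\<Sum>a\<in>UNIV. h$a * (\<Sum>i\<in>UNIV. \<Sum>k\<in>UNIV. c i a k * x$i * x$k))"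
    unfolding 21 by (simp only: sum_distrib_left)
  have "(\<Sum>i\<in>UNIV. \<Sum>j\<in>UNIV. \<Sum>k\<in>UNIV. c i j k * (x$i * x$j * h$k)) = (\<Sum>i\<in>UNIV. \<Sum>k\<in>UNIV. \<Sum>j\<in>UNIV. c i j k * (x$i * x$j * h$k))"
    by (rule sum.cong[OF refl], rule sum.swap)
  also have "\<dots> = (\<Sum>k\<in>UNIV. \<Sum>i\<in>UNIV. \<Sum>j\<in>UNIV. c i j k * (x$i * x$j * h$k))"
    by (rule sum.swap)
  also have "\<dots> = (\<Sum>k\<in>UNIV. \<Sum>i\<in>UNIV. \<Sum>j\<in>UNIV. h$k * (c i j k * x$i * x$j))"
    by (rule sum.cong[OF refl], rule sum.cong[OF refl], rule sum.cong[OF refl]) (simp only: mult_ac)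
  also have "\<dots> = (\<Sum>a\<in>UNIV. h$a * (\<Sum>i\<in>UNIV. \<Sum>j\<in>UNIV. c i j a * x$i * x$j))"
    by (simp only: sum_distrib_left)
  finally have 3: "(\<Sum>i\<in>UNIV. \<Sum>j\<in>UNIV. \<Sum>k\<in>UNIV. c i j k * (x$i * x$j * h$k)) = (\<Sum>a\<in>UNIV. h$a * (\<Sum>i\<in>UNIV. \<Sum>j\<in>UNIV. c i j a * x$i * x$j))" .
  have L: "(\<Sum>i\<in>UNIV. \<Sum>j\<in>UNIV. \<Sum>k\<in>UNIV. c i j k * (h$i * x$j * x$k + x$i * h$j * x$k + x$i * x$j * h$k))
    = (\<Sum>i\<in>UNIV. \<Sum>j\<in>UNIV. \<Sum>k\<in>UNIV. c i j k * (h$i * x$j * x$k)) + (\<Sum>i\<in>UNIV. \<Sum>j\<in>UNIV. \<Sum>k\<in>UNIV. c i j k * (x$i * h$j * x$k))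
      + (\<Sum>i\<in>UNIV. \<Sum>j\<in>UNIV. \<Sum>k\<in>UNIV. c i j k * (x$i * x$j * h$k))"
    by (simp only: distrib_left sum.distrib)
  show ?thesis unfolding L 1 20 2 3 by (simp only: distrib_left sum.distrib)
qed

lemma mm_scaleR_right: "(A::real^'n^'m) ** (r *\<^sub>R B) = r *\<^sub>R (A ** (B::real^'p^'n))"
  by (simp add: matrix_matrix_mult_def vec_eq_iff sum_distrib_left mult.left_commute)

lemma mm_scaleR_left: "(r *\<^sub>R (A::real^'n^'m)) ** B = r *\<^sub>R (A ** (B::real^'p^'n))"
  by (simp add: matrix_matrix_mult_def vec_eq_iff sum_distrib_left mult.assoc)

lemma mm_add_rdistrib: "((A::real^'n^'m) + B) ** (C::real^'p^'n) = A ** C + B ** C"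
  by (simp add: matrix_matrix_mult_def vec_eq_iff sum.distrib distrib_right)

lemma mm_diff_rdistrib: "((A::real^'n^'m) - B) ** (C::real^'p^'n) = A ** C - B ** C"
  by (simp add: matrix_matrix_mult_def vec_eq_iff sum_subtractf left_diff_distrib)

lemma mm_diff_ldistrib: "(C::real^'n^'m) ** ((A::real^'p^'n) - B) = C ** A - C ** B"
  by (simp add: matrix_matrix_mult_def vec_eq_iff sum_subtractf right_diff_distrib)

lemma trace_scaleR: "trace (r *\<^sub>R (A::real^'n^'n)) = r * trace A"
  by (simp add: trace_def sum_distrib_left)

lemma linear_mm_right: "linear (\<lambda>B. (A::real^'n^'m) ** (B::real^'p^'n))"
  by (rule linearI) (simp_all add: matrix_add_ldistrib mm_scaleR_right)

lemma linear_mm_left: "linear (\<lambda>A. (A::real^'n^'m) ** (B::real^'p^'n))"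
  by (rule linearI) (simp_all add: mm_add_rdistrib mm_scaleR_left)

lemma linear_trace: "linear (trace :: real^'n^'n \<Rightarrow> real)"
  by (rule linearI) (simp_all add: trace_add trace_scaleR)

definition psi :: "real^'n^'n \<Rightarrow> real^'n^'n \<Rightarrow> real^'n^'n \<Rightarrow> real" where
  "psi N X Y = trace (N ** (X ** Y))"

lemma linear_psi_right: "linear (psi N X)"
  unfolding psi_def
  by (rule linear_compose[OF linear_compose[OF linear_mm_right linear_mm_right] linear_trace, unfolded o_def])

lemma linear_psi_left: "linear (\<lambda>X. psi N X Y)"
  unfolding psi_def
  by (rule linear_compose[OF linear_compose[OF linear_mm_left linear_mm_right] linear_trace, unfolded o_def])

lemma bb_psi: "bounded_bilinear (psi N)"
  unfolding bilinear_conv_bounded_bilinear[symmetric] bilinear_def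
  using linear_psi_right linear_psi_left by blast

lemma linear_sumM: "linear (\<lambda>y::real^'n. (\<Sum>k\<in>UNIV. y$k *\<^sub>R M k) :: real^'m^'m)"
  by (rule linearI) (simp_all add: scaleR_add_left sum.distrib scaleR_sum_right)

lemma psi_sum_right: "psi N X (\<Sum>k\<in>UNIV. h$k *\<^sub>R M k) = (\<Sum>k\<in>UNIV. h$k * psi N X (M k))"
proof -
  have "psi N X (\<Sum>k\<in>UNIV. h$k *\<^sub>R M k) = (\<Sum>k\<in>UNIV. psi N X (h$k *\<^sub>R M k))"
    by (rule linear_sum[OF linear_psi_right])
  also have "\<dots> = (\<Sum>k\<in>UNIV. h$k * psi N X (M k))"
    using linear_scale[OF linear_psi_right[of N X]] by simp
  finally show ?thesis .
qed

lemma psi_sum_left: "psi N (\<Sum>k\<in>UNIV. h$k *\<^sub>R M k) Y = (\<Sum>k\<in>UNIV. h$k * psi N (M k) Y)"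
proof -
  have "psi N (\<Sum>k\<in>UNIV. h$k *\<^sub>R M k) Y = (\<Sum>k\<in>UNIV. psi N (h$k *\<^sub>R M k) Y)"
    by (rule linear_sum[OF linear_psi_left])
  also have "\<dots> = (\<Sum>k\<in>UNIV. h$k * psi N (M k) Y)"
    using linear_scale[OF linear_psi_left[of N Y]] by simp
  finally show ?thesis .
qed

lemma trace_grad:
  fixes M :: "'n::finite \<Rightarrow> real^'m^'m" and y :: "real^'n"
  shows "grad (\<lambda>y. r * psi N (\<Sum>k\<in>UNIV. y$k *\<^sub>R M k) (\<Sum>k\<in>UNIV. y$k *\<^sub>R M k)) y
       = (\<chi> k. r * (psi N (\<Sum>l\<in>UNIV. y$l *\<^sub>R M l) (M k) + psi N (M k) (\<Sum>l\<in>UNIV. y$l *\<^sub>R M l)))"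
proof (rule grad_eqI)
  let ?L = "\<lambda>y::real^'n. (\<Sum>k\<in>UNIV. y$k *\<^sub>R M k)"
  have dL: "(?L has_derivative ?L) (at y)"
    by (rule bounded_linear_imp_has_derivative[OF linear_sumM[unfolded linear_conv_bounded_linear]])
  have d: "((\<lambda>y. psi N (?L y) (?L y)) has_derivative (\<lambda>h. psi N (?L y) (?L h) + psi N (?L h) (?L y))) (at y)"
    by (rule bounded_bilinear.FDERIV[OF bb_psi dL dL])
  have e0: "(\<lambda>h. r * (psi N Y (?L h) + psi N (?L h) Y)) =
     (\<lambda>h. h \<bullet> (\<chi> k. r * (psi N Y (M k) + psi N (M k) Y)))" for Y
    by (rule ext) (simp add: psi_sum_right psi_sum_left inner_vec_def sum_distrib_left sum.distrib algebra_simps)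
  note e = e0[of "?L y"]
  show "((\<lambda>y. r * psi N (?L y) (?L y)) has_derivative
     (\<lambda>h. h \<bullet> (\<chi> k. r * (psi N (?L y) (M k) + psi N (M k) (?L y))))) (at y)"
    using has_derivative_mult_right[OF d, of r] unfolding e .
qed

definition gH :: "('n \<Rightarrow> 'n \<Rightarrow> 'n \<Rightarrow> real) \<Rightarrow> real^'n \<Rightarrow> real^'n" where
  "gH c x = (\<chi> a. (\<Sum>j\<in>UNIV. \<Sum>k\<in>UNIV. c a j k * x$j * x$k) + (\<Sum>i\<in>UNIV. \<Sum>k\<in>UNIV. c i a k * x$i * x$k)
         + (\<Sum>i\<in>UNIV. \<Sum>j\<in>UNIV. c i j a * x$i * x$j))"

definition Tt :: "('n \<Rightarrow> 'n \<Rightarrow> 'n \<Rightarrow> real) \<Rightarrow> 'n \<Rightarrow> 'n \<Rightarrow> 'n \<Rightarrow> real" where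
  "Tt c a b k = (c a b k + c a k b) + (c b a k + c k a b) + (c b k a + c k b a)"

definition Sm :: "('n \<Rightarrow> 'n \<Rightarrow> 'n \<Rightarrow> real) \<Rightarrow> real^'n \<Rightarrow> real^'n^'n" where
  "Sm c x = (\<chi> a b. \<Sum>k\<in>UNIV. Tt c a b k * x$k)"

definition Tm :: "('n \<Rightarrow> 'n \<Rightarrow> 'n \<Rightarrow> real) \<Rightarrow> 'n \<Rightarrow> real^'n^'n" where
  "Tm c k = (\<chi> a b. Tt c a b k)"

lemma Tt_rot: "Tt c a b k = Tt c k a b"
  unfolding Tt_def by linarith

lemma Tt_swap: "Tt c a b k = Tt c b a k"
  unfolding Tt_def by linarith

lemma grad_cubic:
  fixes H :: "real^'n \<Rightarrow> real"
  assumes "\<forall>x. H x = (\<Sum>i\<in>UNIV. \<Sum>j\<in>UNIV. \<Sum>k\<in>UNIV. c i j k * x$i * x$j * x$k)"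
  shows "grad H = gH c"
proof (rule ext)
  fix x :: "real^'n"
  have Heq: "H = (\<lambda>x. \<Sum>i\<in>UNIV. \<Sum>j\<in>UNIV. \<Sum>k\<in>UNIV. c i j k * x$i * x$j * x$k)"
    using assms by auto
  have e: "(\<lambda>h. \<Sum>i\<in>UNIV. \<Sum>j\<in>UNIV. \<Sum>k\<in>UNIV. c i j k * (h$i * x$j * x$k + x$i * h$j * x$k + x$i * x$j * h$k))
      = (\<lambda>h. h \<bullet> gH c x)"
    by (rule ext) (simp only: cubic_deriv_eq inner_vec_def gH_def vec_lambda_beta inner_real_def)
  show "grad H x = gH c x"
    by (rule grad_eqI) (use cubic_deriv[of c x] in \<open>simp only: Heq e\<close>)
qed

lemma gH_deriv: "(gH c has_derivative (\<lambda>h. Sm c x *v h)) (at x)"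
proof (rule has_derivative_vecI)
  fix a
  have eq: "(\<lambda>x. gH c x $ a) = (\<lambda>x. (\<Sum>j\<in>UNIV. \<Sum>k\<in>UNIV. c a j k * x$j * x$k) + (\<Sum>i\<in>UNIV. \<Sum>k\<in>UNIV. c i a k * x$i * x$k)
         + (\<Sum>i\<in>UNIV. \<Sum>j\<in>UNIV. c i j a * x$i * x$j))"
    by (simp add: gH_def)
  have d: "((\<lambda>x. gH c x $ a) has_derivative (\<lambda>h. (\<Sum>j\<in>UNIV. \<Sum>k\<in>UNIV. c a j k * (h$j * x$k + x$j * h$k))
       + (\<Sum>j\<in>UNIV. \<Sum>k\<in>UNIV. c j a k * (h$j * x$k + x$j * h$k))
       + (\<Sum>j\<in>UNIV. \<Sum>k\<in>UNIV. c j k a * (h$j * x$k + x$j * h$k)))) (at x)"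
    unfolding eq by (intro has_derivative_add quad_deriv)
  have e: "(\<lambda>h. (\<Sum>j\<in>UNIV. \<Sum>k\<in>UNIV. c a j k * (h$j * x$k + x$j * h$k))
       + (\<Sum>j\<in>UNIV. \<Sum>k\<in>UNIV. c j a k * (h$j * x$k + x$j * h$k))
       + (\<Sum>j\<in>UNIV. \<Sum>k\<in>UNIV. c j k a * (h$j * x$k + x$j * h$k))) = (\<lambda>h. (Sm c x *v h) $ a)"
  proof (rule ext)
    fix h :: "real^'a"
    have "(Sm c x *v h) $ a = (\<Sum>b\<in>UNIV. h$b * (\<Sum>k\<in>UNIV. Tt c a b k * x$k))"
      by (simp add: matrix_vector_mult_def Sm_def mult.commute)
    also have "\<dots> = (\<Sum>b\<in>UNIV. h$b * (\<Sum>k\<in>UNIV. (c a b k + c a k b) * x$k))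
       + (\<Sum>b\<in>UNIV. h$b * (\<Sum>k\<in>UNIV. (c b a k + c k a b) * x$k))
       + (\<Sum>b\<in>UNIV. h$b * (\<Sum>k\<in>UNIV. (c b k a + c k b a) * x$k))"
      by (simp only: Tt_def distrib_right sum.distrib distrib_left)
    finally show "(\<Sum>j\<in>UNIV. \<Sum>k\<in>UNIV. c a j k * (h$j * x$k + x$j * h$k))
       + (\<Sum>j\<in>UNIV. \<Sum>k\<in>UNIV. c j a k * (h$j * x$k + x$j * h$k))
       + (\<Sum>j\<in>UNIV. \<Sum>k\<in>UNIV. c j k a * (h$j * x$k + x$j * h$k)) = (Sm c x *v h) $ a"
      by (simp only: quad_deriv_eq)
  qed
  show "((\<lambda>x. gH c x $ a) has_derivative (\<lambda>h. (Sm c x *v h) $ a)) (at x)"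
    using d unfolding e .
qed

lemma hess_cubic:
  fixes H :: "real^'n \<Rightarrow> real"
  assumes "\<forall>x. H x = (\<Sum>i\<in>UNIV. \<Sum>j\<in>UNIV. \<Sum>k\<in>UNIV. c i j k * x$i * x$j * x$k)"
  shows "hess H y = Sm c y"
  unfolding hess_def grad_cubic[OF assms] by (rule jac_eqI[OF gH_deriv])

lemma jac_f0:
  fixes H :: "real^'n \<Rightarrow> real"
  assumes "\<forall>x. H x = (\<Sum>i\<in>UNIV. \<Sum>j\<in>UNIV. \<Sum>k\<in>UNIV. c i j k * x$i * x$j * x$k)"
  shows "jac (\<lambda>y. (Jm::real^'n^'n) *v grad H y) y = Jm ** Sm c y"
proof (rule jac_eqI)
  have "((\<lambda>y. Jm *v gH c y) has_derivative (\<lambda>h. Jm *v (Sm c y *v h))) (at y)"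
    by (rule bounded_linear.has_derivative[OF matrix_vector_mul_bounded_linear gH_deriv])
  then show "((\<lambda>y. Jm *v grad H y) has_derivative (\<lambda>h. (Jm ** Sm c y) *v h)) (at y)"
    unfolding grad_cubic[OF assms] matrix_vector_mul_assoc .
qed

lemma Sm_lin: "Sm c y = (\<Sum>k\<in>UNIV. y$k *\<^sub>R Tm c k)"
  by (simp add: vec_eq_iff Sm_def Tm_def sum_component mult.commute)

lemma Sm_axis: "Sm c (axis k 1) = Tm c k"
  by (simp add: vec_eq_iff Sm_def Tm_def axis_def if_distrib cong: if_cong)

lemma mm_sum_scaleR: "(A::real^'n^'m) ** (\<Sum>k\<in>UNIV. y$k *\<^sub>R B k) = (\<Sum>k\<in>UNIV. y$k *\<^sub>R (A ** (B k :: real^'p^'n)))"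
proof -
  have "A ** (\<Sum>k\<in>UNIV. y$k *\<^sub>R B k) = (\<Sum>k\<in>UNIV. A ** (y$k *\<^sub>R B k))"
    by (rule linear_sum[OF linear_mm_right])
  then show ?thesis by (simp add: mm_scaleR_right)
qed

lemma quad3:
  fixes x1 x2 x3 a b c :: real
  assumes d: "x1 \<noteq> x2" "x1 \<noteq> x3" "x2 \<noteq> x3"
    and e: "a*x1^2 + b*x1 + c = 0" "a*x2^2 + b*x2 + c = 0" "a*x3^2 + b*x3 + c = 0"
  shows "a = 0 \<and> b = 0 \<and> c = 0"
proof -
  have "(x1 - x2) * (a*(x1+x2) + b) = (a*x1^2 + b*x1 + c) - (a*x2^2 + b*x2 + c)" by algebra
  then have 1: "a*(x1+x2) + b = 0" using d e by simp
  have "(x1 - x3) * (a*(x1+x3) + b) = (a*x1^2 + b*x1 + c) - (a*x3^2 + b*x3 + c)" by algebra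
  then have 2: "a*(x1+x3) + b = 0" using d e by simp
  have "a * (x2 - x3) = 0" using 1 2 by algebra
  then have a: "a = 0" using d by simp
  then have b: "b = 0" using 1 by simp
  then show ?thesis using a e by simp
qed

lemma mat_mult_vec: "(mat l :: real^'n^'n) *v v = l *\<^sub>R v"
proof -
  have "(\<Sum>j\<in>UNIV. (if i = j then l else 0) * v$j) = l * v$i" for i
  proof -
    have "(\<Sum>j\<in>UNIV. (if i = j then l else 0) * v$j) = (\<Sum>j\<in>UNIV. if i = j then l * v$i else 0)"
      by (rule sum.cong) auto
    then show ?thesis by simp
  qed
  then show ?thesis unfolding vec_eq_iff matrix_vector_mult_def mat_def by simp
qed

lemma eigvec:
  fixes A :: "real^'n^'n"
  assumes "det (mat l - A) = 0"
  obtains v where "v \<noteq> 0" "A *v v = l *\<^sub>R v"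
proof -
  have "\<not> invertible (mat l - A)" using assms by (simp add: invertible_det_nz)
  then have "\<not> (\<forall>x. (mat l - A) *v x = 0 \<longrightarrow> x = 0)"
    by (simp add: invertible_left_inverse matrix_left_invertible_ker)
  then obtain v where v: "(mat l - A) *v v = 0" "v \<noteq> 0" by blast
  have "A *v v = l *\<^sub>R v" using v(1) by (simp add: matrix_vector_mult_diff_rdistrib mat_mult_vec)
  then show ?thesis using that v(2) by blast
qed

lemma mm_scaleR_vec: "((r::real) *\<^sub>R (M::real^'n^'m)) *v v = r *\<^sub>R (M *v v)"
  by (simp add: vec_eq_iff matrix_vector_mult_def sum_distrib_left mult.assoc)

lemma root_cubic:
  fixes A :: "real^'n^'n"
  assumes cay: "A ** A ** A = e1 *\<^sub>R (A ** A) - e2 *\<^sub>R A + e3 *\<^sub>R mat 1"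
    and v: "v \<noteq> 0" "A *v v = l *\<^sub>R v"
  shows "l^3 = e1 * l^2 - e2 * l + e3"
proof -
  have A2: "(A ** A) *v v = (l^2) *\<^sub>R v"
    by (simp add: matrix_vector_mul_assoc[symmetric] v(2) matrix_vector_mult_scaleR power2_eq_square)
  have A3: "(A ** A ** A) *v v = (l^3) *\<^sub>R v"
    by (simp add: matrix_vector_mul_assoc[symmetric] v(2) matrix_vector_mult_scaleR power3_eq_cube)
  have "(l^3) *\<^sub>R v = (e1 * l^2 - e2 * l + e3) *\<^sub>R v"
    unfolding A3[symmetric] cay
    by (simp add: matrix_vector_mult_add_rdistrib matrix_vector_mult_diff_rdistrib mm_scaleR_vec A2 v(2)
        scaleR_diff_left scaleR_add_left)
  then have "(l^3 - (e1 * l^2 - e2 * l + e3)) *\<^sub>R v = 0" by (simp add: scaleR_diff_left)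
  then show ?thesis using v(1) by simp
qed

lemma transpose_add': "transpose ((X::real^'n^'m) + Y) = transpose X + transpose Y"
  by (simp add: vec_eq_iff transpose_def)

lemma BB_id:
  fixes A :: "real^'n^'n"
  assumes cay: "A ** A ** A = e1 *\<^sub>R (A ** A) - e2 *\<^sub>R A + e3 *\<^sub>R mat 1"
    and d: "l1 \<noteq> l2" "l1 \<noteq> l3" "l2 \<noteq> l3"
    and r: "l1^3 = e1 * l1^2 - e2 * l1 + e3" "l2^3 = e1 * l2^2 - e2 * l2 + e3" "l3^3 = e1 * l3^2 - e2 * l3 + e3"
    and s: "(a + b * l1 + g * l1^2)^2 = 1" "(a + b * l2 + g * l2^2)^2 = 1" "(a + b * l3 + g * l3^2)^2 = 1"
  shows "(a *\<^sub>R mat 1 + b *\<^sub>R A + g *\<^sub>R (A ** A)) ** (a *\<^sub>R mat 1 + b *\<^sub>R A + g *\<^sub>R (A ** A)) = mat 1"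
proof -
  define u0 where "u0 = a^2 + 2*b*g*e3 + g^2*e1*e3"
  define u1 where "u1 = 2*a*b - 2*b*g*e2 + g^2*(e3 - e1*e2)"
  define u2 where "u2 = b^2 + 2*a*g + 2*b*g*e1 + g^2*(e1^2 - e2)"
  have sc: "(u0 - 1) * l^2 * 0 + (u2 * l^2 + u1 * l + (u0 - 1)) = 0"
    if "l^3 = e1 * l^2 - e2 * l + e3" "(a + b * l + g * l^2)^2 = 1" for l
  proof -
    have "u2 * l^2 + u1 * l + (u0 - 1) = (a + b * l + g * l^2)^2 - 1 - (2*b*g + g^2*l + g^2*e1) * (l^3 - (e1 * l^2 - e2 * l + e3))"
      unfolding u0_def u1_def u2_def by algebra
    then show ?thesis using that by simp
  qed
  have "u2 = 0 \<and> u1 = 0 \<and> u0 - 1 = 0"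
    by (rule quad3[OF d]) (use sc[OF r(1) s(1)] sc[OF r(2) s(2)] sc[OF r(3) s(3)] in simp_all)
  then have u: "u0 = 1" "u1 = 0" "u2 = 0" by auto
  let ?I = "mat 1 :: real^'n^'n"
  let ?B = "a *\<^sub>R ?I + b *\<^sub>R A + g *\<^sub>R (A ** A)"
  have A4: "A ** A ** A ** A = e1 *\<^sub>R (e1 *\<^sub>R (A ** A) - e2 *\<^sub>R A + e3 *\<^sub>R ?I) - e2 *\<^sub>R (A ** A) + e3 *\<^sub>R A"
    by (simp add: cay mm_add_rdistrib mm_diff_rdistrib mm_scaleR_left)
  have AB: "A ** ?B = a *\<^sub>R A + b *\<^sub>R (A ** A) + g *\<^sub>R (A ** A ** A)"
    by (simp add: matrix_add_ldistrib mm_scaleR_right matrix_mul_assoc)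
  have A2B: "(A ** A) ** ?B = a *\<^sub>R (A ** A) + b *\<^sub>R (A ** A ** A) + g *\<^sub>R (A ** A ** A ** A)"
    by (simp add: matrix_add_ldistrib mm_scaleR_right matrix_mul_assoc)
  have BB: "?B ** ?B = a *\<^sub>R ?B + b *\<^sub>R (A ** ?B) + g *\<^sub>R ((A ** A) ** ?B)"
    by (simp only: mm_add_rdistrib mm_scaleR_left matrix_mul_lid)
  have "(?B ** ?B) $ i $ j = ?I $ i $ j" for i j
  proof -
    have "(?B ** ?B) $ i $ j = a * (a * ?I $ i $ j + b * A $ i $ j + g * (A ** A) $ i $ j)
      + b * (a * A $ i $ j + b * (A ** A) $ i $ j + g * (e1 * (A ** A) $ i $ j - e2 * A $ i $ j + e3 * ?I $ i $ j))
      + g * (a * (A ** A) $ i $ j + b * (e1 * (A ** A) $ i $ j - e2 * A $ i $ j + e3 * ?I $ i $ j)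
           + g * (e1 * (e1 * (A ** A) $ i $ j - e2 * A $ i $ j + e3 * ?I $ i $ j) - e2 * (A ** A) $ i $ j + e3 * A $ i $ j))"
      unfolding BB AB A2B unfolding A4 unfolding cay
      by (simp only: vector_add_component vector_minus_component vector_scaleR_component
          real_scaleR_def mult_1_right)
    also have "\<dots> = ?I $ i $ j"
      using u unfolding u0_def u1_def u2_def by algebra
    finally show ?thesis .
  qed
  then show ?thesis by (simp add: vec_eq_iff)
qed

theorem mainTheorem14:
  fixes A :: "real^6^6" and H0 :: "real^6 \<Rightarrow> real"
    and lam :: "nat \<Rightarrow> real"
    and \<alpha> \<beta> \<gamma> :: "nat \<Rightarrow> real"
    and i :: nat and x :: "real^6"
  assumes skewHam: "transpose A ** Jmat = Jmat ** A"
    and cubic: "hom_cubic H0"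
    and comm: "\<forall>y. A ** hess H0 y = hess H0 y ** transpose A"
    and distinct: "lam 1 \<noteq> lam 2" "lam 1 \<noteq> lam 3" "lam 2 \<noteq> lam 3"
    and charp: "\<forall>t. charpoly A t = ((t - lam 1) * (t - lam 2) * (t - lam 3))^2"
    and interp: "\<forall>k\<in>{1,2,3}. \<forall>m\<in>{1,2,3::nat}.
        \<alpha> k + \<beta> k * lam m + \<gamma> k * (lam m)^2 = (if m = k then -1 else 1)"
    and i: "i \<in> {1,2,3}"
  shows
    "let B = (\<lambda>k. \<alpha> k *\<^sub>R mat 1 + \<beta> k *\<^sub>R A + \<gamma> k *\<^sub>R (A ** A));
         f0 = (\<lambda>y. Jmat *v grad H0 y);
         f0' = jac f0;
         p0 = (\<lambda>y. (1/8) * trace (f0' y ** f0' y));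
         q = (\<lambda>k y. (1/8) * trace (transpose (B k) ** (f0' y ** f0' y)))
     in grad p0 x = B i *v grad (q i) x"
proof -
  obtain c where hc: "\<forall>x. H0 x = (\<Sum>i\<in>UNIV. \<Sum>j\<in>UNIV. \<Sum>k\<in>UNIV. c i j k * x$i * x$j * x$k)"
    using cubic unfolding hom_cubic_def by blast
  have cay: "A ** A ** A = ce1 A *\<^sub>R (A ** A) - ce2 A *\<^sub>R A + ce3 A *\<^sub>R mat 1"
    by (rule cayley_skew[OF skewHam])
  have root: "lam m ^ 3 = ce1 A * lam m ^ 2 - ce2 A * lam m + ce3 A" if "m \<in> {1,2,3}" for m
  proof -
    have "charpoly A (lam m) = 0" using charp that by auto
    then have "det (mat (lam m) - A) = 0" by (simp add: charpoly_def)
    then obtain v where "v \<noteq> 0" "A *v v = lam m *\<^sub>R v" by (rule eigvec)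
    then show ?thesis by (rule root_cubic[OF cay])
  qed
  have s: "(\<alpha> i + \<beta> i * lam m + \<gamma> i * (lam m)^2)^2 = 1" if "m \<in> {1,2,3}" for m
    using interp i that by (auto simp: power2_eq_square)
  define B where "B = \<alpha> i *\<^sub>R mat 1 + \<beta> i *\<^sub>R A + \<gamma> i *\<^sub>R (A ** A)"
  have BB: "B ** B = mat 1"
    unfolding B_def
    by (rule BB_id[OF cay distinct root root root s s s]) simp_all
  define T where "T = Tm c"
  have AT: "A ** T k = T k ** transpose A" for k
    using comm[rule_format, of "axis k 1"] unfolding hess_cubic[OF hc] Sm_axis T_def .
  have A2T: "(A ** A) ** T k = T k ** (transpose A ** transpose A)" for k
  proof -
    have "(A ** A) ** T k = A ** (A ** T k)" by (simp add: matrix_mul_assoc)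
    also have "\<dots> = (A ** T k) ** transpose A" by (simp add: AT matrix_mul_assoc)
    also have "\<dots> = T k ** (transpose A ** transpose A)" by (simp add: AT matrix_mul_assoc)
    finally show ?thesis .
  qed
  have tB: "transpose B = \<alpha> i *\<^sub>R mat 1 + \<beta> i *\<^sub>R transpose A + \<gamma> i *\<^sub>R (transpose A ** transpose A)"
    unfolding B_def by (simp add: transpose_add' transpose_scalar matrix_transpose_mul)
  have BT: "B ** T k = T k ** transpose B" for k
    unfolding tB unfolding B_def
    by (simp add: mm_add_rdistrib matrix_add_ldistrib mm_scaleR_left mm_scaleR_right AT A2T)
  have A2J: "(transpose A ** transpose A) ** Jmat = Jmat ** (A ** A)"
  proof -
    have "(transpose A ** transpose A) ** Jmat = transpose A ** (transpose A ** Jmat)" by (simp add: matrix_mul_assoc)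
    also have "\<dots> = (transpose A ** Jmat) ** A" by (simp add: skewHam matrix_mul_assoc)
    also have "\<dots> = Jmat ** (A ** A)" by (simp add: skewHam matrix_mul_assoc)
    finally show ?thesis .
  qed
  have BJ: "transpose B ** Jmat = Jmat ** B"
    unfolding tB unfolding B_def
    by (simp add: mm_add_rdistrib matrix_add_ldistrib mm_scaleR_left mm_scaleR_right skewHam A2J)
  have TB: "(\<Sum>l\<in>UNIV. B$k$l *\<^sub>R T l) = B ** T k" for k
  proof -
    have "(\<Sum>l\<in>UNIV. B$k$l * Tt c a b l) = (\<Sum>m\<in>UNIV. B$a$m * Tt c m b k)" for a b
    proof -
      have e: "(B ** T b) $ k $ a = (T b ** transpose B) $ k $ a" using BT[of b] by simp
      have "(\<Sum>l\<in>UNIV. B$k$l * Tt c a b l) = (\<Sum>l\<in>UNIV. B$k$l * Tt c l a b)"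
        by (simp add: Tt_rot[of c a b])
      also have "\<dots> = (B ** T b) $ k $ a" by (simp add: matrix_matrix_mult_def T_def Tm_def)
      also have "\<dots> = (T b ** transpose B) $ k $ a" by (rule e)
      also have "\<dots> = (\<Sum>m\<in>UNIV. Tt c k m b * B$a$m)" by (simp add: matrix_matrix_mult_def T_def Tm_def transpose_def)
      also have "\<dots> = (\<Sum>m\<in>UNIV. B$a$m * Tt c m b k)" by (simp add: Tt_rot[of c _ b k, symmetric] mult.commute)
      finally show ?thesis .
    qed
    then show ?thesis by (simp add: vec_eq_iff sum_component matrix_matrix_mult_def T_def Tm_def)
  qed
  define M where "M k = Jmat ** T k" for k
  define L where "L y = (\<Sum>k\<in>UNIV. y$k *\<^sub>R M k)" for y :: "real^6"
  have F: "jac (\<lambda>y. Jmat *v grad H0 y) y = L y" for y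
    unfolding jac_f0[OF hc] Sm_lin L_def M_def T_def by (rule mm_sum_scaleR)
  have p0eq: "(\<lambda>y. (1/8) * trace (jac (\<lambda>y. Jmat *v grad H0 y) y ** jac (\<lambda>y. Jmat *v grad H0 y) y))
      = (\<lambda>y. (1/8) * psi (mat 1) (\<Sum>k\<in>UNIV. y$k *\<^sub>R M k) (\<Sum>k\<in>UNIV. y$k *\<^sub>R M k))"
    by (simp add: F psi_def L_def)
  have qeq: "(\<lambda>y. (1/8) * trace (transpose B ** (jac (\<lambda>y. Jmat *v grad H0 y) y ** jac (\<lambda>y. Jmat *v grad H0 y) y)))
      = (\<lambda>y. (1/8) * psi (transpose B) (\<Sum>k\<in>UNIV. y$k *\<^sub>R M k) (\<Sum>k\<in>UNIV. y$k *\<^sub>R M k))"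
    by (simp add: F psi_def L_def)
  have gp: "grad (\<lambda>y. (1/8) * psi (mat 1) (\<Sum>k\<in>UNIV. y$k *\<^sub>R M k) (\<Sum>k\<in>UNIV. y$k *\<^sub>R M k)) x
      = (\<chi> k. (1/8) * (psi (mat 1) (L x) (M k) + psi (mat 1) (M k) (L x)))"
    unfolding L_def by (rule trace_grad)
  have gq: "grad (\<lambda>y. (1/8) * psi (transpose B) (\<Sum>k\<in>UNIV. y$k *\<^sub>R M k) (\<Sum>k\<in>UNIV. y$k *\<^sub>R M k)) x
      = (\<chi> k. (1/8) * (psi (transpose B) (L x) (M k) + psi (transpose B) (M k) (L x)))"
    unfolding L_def by (rule trace_grad)
  have key: "(B *v (\<chi> k. (1/8) * (psi (transpose B) (L x) (M k) + psi (transpose B) (M k) (L x)))) $ k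
      = (1/8) * (psi (mat 1) (L x) (M k) + psi (mat 1) (M k) (L x))" for k
  proof -
    let ?X = "L x"
    have MB: "(\<Sum>l\<in>UNIV. B$k$l *\<^sub>R M l) = Jmat ** (B ** T k)"
      unfolding M_def TB[symmetric] by (rule mm_sum_scaleR[symmetric])
    have s1: "(\<Sum>l\<in>UNIV. B$k$l * psi (transpose B) ?X (M l)) = psi (transpose B) ?X (Jmat ** (B ** T k))"
      using psi_sum_right[of "transpose B" ?X "B$k" M] MB by simp
    have s2: "(\<Sum>l\<in>UNIV. B$k$l * psi (transpose B) (M l) ?X) = psi (transpose B) (Jmat ** (B ** T k)) ?X"
      using psi_sum_left[of "transpose B" "B$k" M ?X] MB by simp
    have q1: "psi (transpose B) ?X (Jmat ** (B ** T k)) = trace ((Jmat ** T k) ** ?X)"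
    proof -
      have "psi (transpose B) ?X (Jmat ** (B ** T k)) = trace ((?X ** (Jmat ** (B ** T k))) ** transpose B)"
        unfolding psi_def by (rule trace_mul_sym)
      also have "\<dots> = trace (?X ** (Jmat ** (B ** (T k ** transpose B))))"
        by (simp only: matrix_mul_assoc)
      also have "\<dots> = trace (?X ** (Jmat ** ((B ** B) ** T k)))"
        by (simp only: BT[symmetric] matrix_mul_assoc)
      also have "\<dots> = trace ((Jmat ** T k) ** ?X)"
        unfolding BB matrix_mul_lid by (rule trace_mul_sym)
      finally show ?thesis .
    qed
    have q2: "psi (transpose B) (Jmat ** (B ** T k)) ?X = trace ((Jmat ** T k) ** ?X)"
    proof -
      have "psi (transpose B) (Jmat ** (B ** T k)) ?X = trace ((((transpose B ** Jmat) ** B) ** T k) ** ?X)"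
        unfolding psi_def by (simp only: matrix_mul_assoc)
      also have "\<dots> = trace ((Jmat ** (B ** B)) ** T k ** ?X)"
        by (simp only: BJ matrix_mul_assoc)
      also have "\<dots> = trace ((Jmat ** T k) ** ?X)"
        unfolding BB matrix_mul_rid ..
      finally show ?thesis .
    qed
    have p1: "psi (mat 1) ?X (M k) = trace ((Jmat ** T k) ** ?X)"
      unfolding psi_def M_def matrix_mul_lid by (rule trace_mul_sym)
    have p2: "psi (mat 1) (M k) ?X = trace ((Jmat ** T k) ** ?X)"
      unfolding psi_def M_def matrix_mul_lid ..
    have "(B *v (\<chi> k. (1/8) * (psi (transpose B) ?X (M k) + psi (transpose B) (M k) ?X))) $ k
        = (\<Sum>l\<in>UNIV. B$k$l * ((1/8) * (psi (transpose B) ?X (M l) + psi (transpose B) (M l) ?X)))"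
      by (simp add: matrix_vector_mult_def)
    also have "\<dots> = (1/8) * ((\<Sum>l\<in>UNIV. B$k$l * psi (transpose B) ?X (M l)) + (\<Sum>l\<in>UNIV. B$k$l * psi (transpose B) (M l) ?X))"
      by (simp add: sum_distrib_left sum.distrib algebra_simps)
    also have "\<dots> = (1/8) * (psi (mat 1) ?X (M k) + psi (mat 1) (M k) ?X)"
      unfolding s1 s2 q1 q2 p1 p2 ..
    finally show ?thesis .
  qed
  show ?thesis
    unfolding Let_def B_def[symmetric] p0eq qeq gp gq
    by (simp only: vec_eq_iff key vec_lambda_beta simp_thms)
qed

end
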